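(* Let $a$ be a parameter and let $T\in\{\mathrm{I},\mathrm{II}\}$. Suppose $(\alpha,\beta)$ is an A$_2$ Bailey pair of type $T$ relative to $a$. Define \[ \alpha'_k = a^{k_1+k_2}\, q^{\frac{1}{2}(k_1^2+k_2^2+k_3^2)}\,\alpha_k \qquad (k_1\ge k_2\ge k_3,\ k_1+k_2+k_3=0), \] \[ \beta'_L = f^{(T)}_L \sum_{r_1=0}^{L_1}\sum_{r_2=0}^{L_2} \frac{a^{r_1} q^{r_1^2-r_1r_2+r_2^2}}{(q)_{L_1-r_1}(q)_{L_2-r_2}}\,\beta_{r_1,r_2} \qquad (L_1,L_2\ge 0), \] where $f^{(\mathrm{I})}_L = 1/(aq)_{L_1+L_2}$ and $f^{(\mathrm{II})}_L=1$. Then $(\alpha',\beta')$ is an A$_2$ Bailey pair of type II relative to $a$.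
   Context: For any $x$ and integer $n$, $(x)_n=(x;q)_n=(x;q)_\infty/(xq^n;q)_\infty$, i.e. $(x)_n=\prod_{j=0}^{n-1}(1-xq^j)$ for $n\ge 0$ and $(x)_n=\prod_{j=1}^{-n}(1-xq^{-j})^{-1}$ for $n<0$; in particular $1/(q)_n=0$ for $n<0$. Write $\alpha_k=\alpha_{k_1,k_2,k_3}$ for integer triples $k$ with $k_1\ge k_2\ge k_3$, $k_1+k_2+k_3=0$, and $\beta_L=\beta_{L_1,L_2}$ for integers $L_1,L_2\ge 0$. A pair of sequences $(\alpha,\beta)$ is an A$_2$ Bailey pair of type I relative to $a$ if for all $L_1,L_2\ge0$ \[ \beta_L=\sum_{\substack{k_1\ge k_2\ge k_3\\ k_1+k_2+k_3=0}}\alpha_k\sum_r \frac{q^{r_1r_{23}}}{(q)_{r_1}(q)_{r_2}(aq)_{r_3}(q)_{r_{12}}(q)_{r_{13}}(q)_{r_{23}}}, \] where the inner sum is over integers $r_1,r_2,r_3,r_{12},r_{13},r_{23}$ satisfying $r_1+r_{12}+r_{13}=L_2-k_1$, $r_2+r_{12}+r_{23}=L_2-k_2$, $r_3+r_{13}+r_{23}=L_2-k_3$, $r_1+r_2+r_3=2L_1-L_2$, $r_{12}+r_{13}+r_{23}=2L_2-L_1$. It is an A$_2$ Bailey pair of type II relative to $a$ if for all $L_1,L_2\ge 0$ \[ \beta_L=\sum_{\substack{k_1\ge k_2\ge k_3\\ k_1+k_2+k_3=0}}\alpha_k\,\frac{(aq)_{L_1+L_2}}{(aq)_{L_1+k_1}(aq)_{L_1+k_2}(q)_{L_1+k_3}(q)_{L_2-k_1}(q)_{L_2-k_2}(aq)_{L_2-k_3}}.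 \] *)

theory Defs
  imports Main "HOL-Library.Groups_Big_Fun"
begin

text \<open>With q nonzero, (q;q)_n = 0 for n < 0, so 1/(q;q)_n = 0 as in the paper.\<close>
definition qpoch :: "'a::field \<Rightarrow> 'a \<Rightarrow> int \<Rightarrow> 'a" where
  "qpoch x q n =
     (if 0 \<le> n then (\<Prod>j<nat n. (1 - x * q ^ j))
      else inverse (\<Prod>j\<in>{1..nat (- n)}. (1 - x * q powi (- int j))))"

definition A2_index :: "int \<times> int \<times> int \<Rightarrow> bool" where
  "A2_index k = (case k of (k1, k2, k3) \<Rightarrow> k2 \<le> k1 \<and> k3 \<le> k2 \<and> k1 + k2 + k3 = 0)"

definition kernel_I :: "'a::field \<Rightarrow> 'a \<Rightarrow> nat \<Rightarrow> nat \<Rightarrow> int \<times> int \<times> int \<Rightarrow> 'a" where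
  "kernel_I a q L1 L2 k = (case k of (k1, k2, k3) \<Rightarrow>
     Sum_any (\<lambda>(r1, r2, r3, r12, r13, r23).
       if r1 + r12 + r13 = int L2 - k1 \<and> r2 + r12 + r23 = int L2 - k2 \<and>
          r3 + r13 + r23 = int L2 - k3 \<and> r1 + r2 + r3 = 2 * int L1 - int L2 \<and>
          r12 + r13 + r23 = 2 * int L2 - int L1
       then q powi (r1 * r23) /
          (qpoch q q r1 * qpoch q q r2 * qpoch (a * q) q r3 *
           qpoch q q r12 * qpoch q q r13 * qpoch q q r23)
       else 0))"

definition kernel_II :: "'a::field \<Rightarrow> 'a \<Rightarrow> nat \<Rightarrow> nat \<Rightarrow> int \<times> int \<times> int \<Rightarrow> 'a" where
  "kernel_II a q L1 L2 k = (case k of (k1, k2, k3) \<Rightarrow>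
     qpoch (a * q) q (int L1 + int L2) /
       (qpoch (a * q) q (int L1 + k1) * qpoch (a * q) q (int L1 + k2) * qpoch q q (int L1 + k3) *
        qpoch q q (int L2 - k1) * qpoch q q (int L2 - k2) * qpoch (a * q) q (int L2 - k3)))"

datatype bailey_type = TypeI | TypeII

definition bailey_kernel :: "bailey_type \<Rightarrow> 'a::field \<Rightarrow> 'a \<Rightarrow> nat \<Rightarrow> nat \<Rightarrow> int \<times> int \<times> int \<Rightarrow> 'a" where
  "bailey_kernel T = (case T of TypeI \<Rightarrow> kernel_I | TypeII \<Rightarrow> kernel_II)"

text \<open>(alpha, beta) is an A2 Bailey pair of type T relative to a.
  The sum over k ranges over all admissible triples (finitely many nonzero terms).\<close>
definition A2_bailey_pair ::
  "bailey_type \<Rightarrow> 'a::field \<Rightarrow> 'a \<Rightarrow> (int \<times> int \<times> int \<Rightarrow> 'a) \<Rightarrow> (nat \<Rightarrow> nat \<Rightarrow> 'a) \<Rightarrow> bool" where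
  "A2_bailey_pair T a q \<alpha> \<beta> \<longleftrightarrow>
     (\<forall>L1 L2. \<beta> L1 L2 =
        Sum_any (\<lambda>k. if A2_index k then \<alpha> k * bailey_kernel T a q L1 L2 k else 0))"

definition bailey_f :: "bailey_type \<Rightarrow> 'a::field \<Rightarrow> 'a \<Rightarrow> nat \<Rightarrow> nat \<Rightarrow> 'a" where
  "bailey_f T a q L1 L2 =
     (case T of TypeI \<Rightarrow> 1 / qpoch (a * q) q (int L1 + int L2) | TypeII \<Rightarrow> 1)"

end

theory Submission
  imports Defs
begin

lemma SA_cmult:
  fixes f :: "'b \<Rightarrow> 'a::field"
  shows "Sum_any (\<lambda>x. c * f x) = c * Sum_any f"
proof (cases "c = 0")
  case True then show ?thesis by simp
next
  case False
  show ?thesis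
  proof (cases "finite {x. f x \<noteq> 0}")
    case True then show ?thesis by (simp add: Sum_any_right_distrib)
  next
    case nf: False
    have "{x. c * f x \<noteq> 0} = {x. f x \<noteq> 0}" using False by auto
    then show ?thesis using nf by simp
  qed
qed

lemma SA_shift:
  fixes f :: "int \<Rightarrow> 'a::comm_monoid_add"
  shows "Sum_any (\<lambda>x. f (x + c)) = Sum_any f"
proof -
  have "bij (\<lambda>x::int. x + c)"
    by (rule bijI) (auto simp: inj_def image_def intro: exI[of _ "_ - c"])
  then show ?thesis
    by (rule Sum_any.reindex_cong[symmetric]) (simp add: o_def)
qed

lemma SA_fin:
  fixes f :: "int \<Rightarrow> 'a::zero"
  assumes "\<And>x. f x \<noteq> 0 \<Longrightarrow> lo \<le> x \<and> x \<le> hi"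
  shows "finite {x. f x \<noteq> 0}"
  by (rule finite_subset[of _ "{lo..hi}"]) (use assms in auto)

lemma SA_single:
  fixes f :: "int \<Rightarrow> 'a::comm_monoid_add"
  assumes "\<And>x. x \<noteq> c \<Longrightarrow> f x = 0"
  shows "Sum_any f = f c"
proof -
  have "f = (\<lambda>x. if x = c then f x else 0)" using assms by auto
  then show ?thesis by (metis Sum_any.delta)
qed

locale qs =
  fixes q :: "'a::field"
  assumes qnz: "q \<noteq> 0" and qgen: "\<And>n::nat. n \<ge> 1 \<Longrightarrow> q ^ n \<noteq> 1"
begin

definition E :: "int \<Rightarrow> 'a" where "E n = q powi n"
definition Q :: "int \<Rightarrow> 'a" where
  "Q n = (if n < 0 then 0 else inverse (\<Prod>j<nat n. (1 - q ^ Suc j)))"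
definition pp :: "'a \<Rightarrow> int \<Rightarrow> 'a" where "pp x k = (\<Prod>j<nat k. (1 - x * q ^ j))"
definition pim :: "'a \<Rightarrow> int \<Rightarrow> 'a" where "pim y k = (\<Prod>j<nat k. (1 - y * E (- int j)))"

lemma E_add: "E (m + n) = E m * E n"
  by (simp add: E_def power_int_add qnz)
lemma E_0[simp]: "E 0 = 1" by (simp add: E_def)
lemma E_1[simp]: "E 1 = q" by (simp add: E_def)
lemma E_nat: "E (int n) = q ^ n" by (simp add: E_def)
lemma E_nz: "E n \<noteq> 0" by (simp add: E_def qnz)
lemma E_minus: "E (- n) * E n = 1"
  by (metis E_0 E_add add.commute add.right_inverse)

lemma E_nat': "k \<ge> 0 \<Longrightarrow> E k = q ^ nat k"
  by (metis E_nat int_nat_eq)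

lemma one_minus_qpow_nz: "m \<ge> 1 \<Longrightarrow> 1 - q ^ m \<noteq> 0"
  using qgen by auto

lemma prodQ_nz: "(\<Prod>j<m. (1 - q ^ Suc j)) \<noteq> 0"
proof -
  have "\<And>a. q ^ Suc a \<noteq> 1" using qgen by (metis le_add1 plus_1_eq_Suc)
  then show ?thesis by (simp add: prod_zero_iff del: power_Suc)
qed

lemma Q_neg: "n < 0 \<Longrightarrow> Q n = 0" by (simp add: Q_def)
lemma Q_0[simp]: "Q 0 = 1" by (simp add: Q_def)
lemma Q_nz: "n \<ge> 0 \<Longrightarrow> Q n \<noteq> 0"
  using prodQ_nz by (simp add: Q_def)

lemma Q_rec: "Q n = (1 - E (n + 1)) * Q (n + 1)"
proof (cases "n < -1")
  case True then show ?thesis by (simp add: Q_neg)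
next
  case False
  show ?thesis
  proof (cases "n = -1")
    case True then show ?thesis by (simp add: Q_neg)
  next
    case False
    with \<open>\<not> n < -1\<close> have n0: "n \<ge> 0" by simp
    then have nn: "nat (n + 1) = Suc (nat n)" by simp
    have e: "E (n + 1) = q ^ Suc (nat n)"
      using n0 E_nat'[of "n + 1"] nn by simp
    have "Q (n + 1) = inverse ((\<Prod>j<nat n. (1 - q ^ Suc j)) * (1 - q ^ Suc (nat n)))"
      using n0 by (simp add: Q_def nn del: power_Suc)
    then show ?thesis using n0 one_minus_qpow_nz[of "Suc (nat n)"]
      by (simp add: Q_def e del: power_Suc)
  qed
qed

lemma Q_rec': "Q (n - 1) = (1 - E n) * Q n"
  using Q_rec[of "n - 1"] by simp

lemma pp_0[simp]: "pp x 0 = 1" by (simp add: pp_def)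
lemma pp_Suc: "k \<ge> 0 \<Longrightarrow> pp x (k + 1) = pp x k * (1 - x * E k)"
  by (simp add: pp_def nat_add_distrib E_nat')
lemma pim_0[simp]: "pim y 0 = 1" by (simp add: pim_def)
lemma pim_Suc: "k \<ge> 0 \<Longrightarrow> pim y (k + 1) = (1 - y) * pim (y / q) k"
proof -
  assume k: "k \<ge> 0"
  have "pim y (k + 1) = (\<Prod>j<Suc (nat k). (1 - y * E (- int j)))"
    using k by (simp add: pim_def nat_add_distrib)
  also have "\<dots> = (1 - y) * (\<Prod>j<nat k. (1 - y * E (- int (Suc j))))"
    by (subst prod.lessThan_Suc_shift) simp
  also have "(\<Prod>j<nat k. (1 - y * E (- int (Suc j)))) = pim (y / q) k"
    unfolding pim_def
  proof (rule prod.cong[OF refl])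
    fix j
    have m1: "E (-1) = inverse q" by (simp add: E_def power_int_minus)
    have eq: "- int (Suc j) = - int j + (-1)" by simp
    have "E (- int (Suc j)) = E (- int j) * E (-1)" by (simp only: eq E_add)
    then have "E (- int (Suc j)) = E (- int j) / q" by (simp add: m1 divide_inverse)
    then show "1 - y * E (- int (Suc j)) = 1 - y / q * E (- int j)" by simp
  qed
  finally show ?thesis .
qed

lemma E_mult2: "a + b = c \<Longrightarrow> E a * E b = E c"
  by (simp add: E_add[symmetric])

lemma E_diff: "E (m - n) = E m / E n"
  by (metis E_add E_nz diff_add_cancel nonzero_mult_div_cancel_right)
lemma E_uminus: "E (- n) = 1 / E n"
  using E_diff[of 0 n] by simp
lemma E_numeral: "E (numeral k) = q ^ numeral k"
  by (simp add: E_def)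
lemma E_mult_numeral: "E (numeral k * n) = E n ^ numeral k"
  by (simp add: E_def power_int_mult power_int_numeral mult.commute)
lemma E_mult_numeral': "E (n * numeral k) = E n ^ numeral k"
  by (simp add: E_def power_int_mult power_int_numeral)
lemmas Esimps = E_add E_diff E_uminus E_numeral E_mult_numeral E_mult_numeral' E_nz


lemma SA_shift_minus:
  fixes f :: "int \<Rightarrow> 'b::comm_monoid_add"
  shows "Sum_any (\<lambda>x. f (x - c)) = Sum_any f"
  using SA_shift[of f "- c"] by simp

definition TV :: "nat \<Rightarrow> nat \<Rightarrow> 'a \<Rightarrow> int \<Rightarrow> 'a" where
  "TV n d y \<alpha> = E (\<alpha> * (\<alpha> + int d)) * Q \<alpha> * Q (\<alpha> + int d) * Q (int n - \<alpha>) * pim y \<alpha>"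

lemma TV_supp: "TV n d y \<alpha> \<noteq> 0 \<Longrightarrow> 0 \<le> \<alpha> \<and> \<alpha> \<le> int n"
  unfolding TV_def by (metis Q_neg diff_ge_0_iff_ge mult_zero_left mult_zero_right not_le)

lemma TV_fin: "finite {\<alpha>. TV n d y \<alpha> \<noteq> 0}"
  by (rule SA_fin[of _ 0 "int n"]) (rule TV_supp)

lemma TV_step:
  "(1 - E (int n + 1)) * TV (Suc n) d y \<alpha> =
     TV n d y \<alpha> + (1 - y) * E (int n + int d + 1) * TV n (Suc d) (y / q) (\<alpha> - 1)"
proof (cases "\<alpha> \<ge> 1")
  case True
  have p: "pim y \<alpha> = (1 - y) * pim (y / q) (\<alpha> - 1)"
    using pim_Suc[of "\<alpha> - 1" y] True by simp
  have q1: "Q (int n - \<alpha>) = (1 - E (int n + 1 - \<alpha>)) * Q (int n + 1 - \<alpha>)"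
    using Q_rec[of "int n - \<alpha>"] by (simp add: algebra_simps)
  have q2: "Q (\<alpha> - 1) = (1 - E \<alpha>) * Q \<alpha>" using Q_rec'[of \<alpha>] .
  have e1: "E (int n + 1 - \<alpha>) * E \<alpha> = E (int n + 1)" by (rule E_mult2) simp
  have e2: "E (int n + int d + 1) * E ((\<alpha> - 1) * (\<alpha> - 1 + int (Suc d))) =
      E (\<alpha> * (\<alpha> + int d)) * E (int n + 1 - \<alpha>)"
    by (simp add: E_add[symmetric] algebra_simps)
  have tv: "TV n (Suc d) (y / q) (\<alpha> - 1) =
      E ((\<alpha> - 1) * (\<alpha> - 1 + int (Suc d))) * ((1 - E \<alpha>) * Q \<alpha>) * Q (\<alpha> + int d) *
        Q (int n + 1 - \<alpha>) * pim (y / q) (\<alpha> - 1)"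
    unfolding TV_def q2 by (simp add: algebra_simps)
  have r2: "(1 - y) * E (int n + int d + 1) * TV n (Suc d) (y / q) (\<alpha> - 1) =
      (E (\<alpha> * (\<alpha> + int d)) * E (int n + 1 - \<alpha>)) * (1 - E \<alpha>) *
       (Q \<alpha> * Q (\<alpha> + int d) * Q (int n + 1 - \<alpha>) * pim y \<alpha>)"
    by (subst e2[symmetric], subst p, simp only: tv mult_ac)
  have r1: "TV n d y \<alpha> = E (\<alpha> * (\<alpha> + int d)) * (1 - E (int n + 1 - \<alpha>)) *
       (Q \<alpha> * Q (\<alpha> + int d) * Q (int n + 1 - \<alpha>) * pim y \<alpha>)"
    unfolding TV_def q1 by (simp add: algebra_simps)
  have l: "(1 - E (int n + 1)) * TV (Suc n) d y \<alpha> =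
      (1 - E (int n + 1 - \<alpha>) * E \<alpha>) * E (\<alpha> * (\<alpha> + int d)) *
       (Q \<alpha> * Q (\<alpha> + int d) * Q (int n + 1 - \<alpha>) * pim y \<alpha>)"
    unfolding TV_def e1 by (simp add: algebra_simps)
  show ?thesis unfolding l r1 r2 by (simp add: algebra_simps)
next
  case False
  then have "\<alpha> < 0 \<or> \<alpha> = 0" by auto
  then show ?thesis
  proof
    assume "\<alpha> < 0" then show ?thesis by (simp add: TV_def Q_neg)
  next
    assume a0: "\<alpha> = 0"
    have h: "Q (int n) = (1 - E (int n + 1)) * Q (int n + 1)" by (rule Q_rec)
    have t1: "TV (Suc n) d y \<alpha> = Q (int d) * Q (int n + 1)" using a0 by (simp add: TV_def add.commute)
    have t2: "TV n d y \<alpha> = Q (int d) * Q (int n)" using a0 by (simp add: TV_def)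
    have t3: "TV n (Suc d) (y / q) (\<alpha> - 1) = 0" using a0 by (simp add: TV_def Q_neg)
    show ?thesis unfolding t1 t2 t3 h by (simp add: algebra_simps)
  qed
qed

lemma VAc:
  "Sum_any (TV n d y) = pp (y * E (int d + 1)) (int n) * Q (int n) * Q (int n + int d)"
proof (induction n arbitrary: d y)
  case 0
  have "Sum_any (TV 0 d y) = TV 0 d y 0"
    by (rule SA_single) (use TV_supp in fastforce)
  then show ?case by (simp add: TV_def)
next
  case (Suc n)
  let ?c = "(1 - y) * E (int n + int d + 1)"
  have fin2: "finite {\<alpha>. ?c * TV n (Suc d) (y / q) (\<alpha> - 1) \<noteq> 0}"
    by (rule SA_fin[of _ 1 "int n + 1"]) (use TV_supp in fastforce)
  have "(1 - E (int n + 1)) * Sum_any (TV (Suc n) d y) =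
      Sum_any (\<lambda>\<alpha>. (1 - E (int n + 1)) * TV (Suc n) d y \<alpha>)"
    by (simp add: SA_cmult)
  also have "\<dots> = Sum_any (\<lambda>\<alpha>. TV n d y \<alpha> + ?c * TV n (Suc d) (y / q) (\<alpha> - 1))"
    by (simp add: TV_step)
  also have "\<dots> = Sum_any (TV n d y) + Sum_any (\<lambda>\<alpha>. ?c * TV n (Suc d) (y / q) (\<alpha> - 1))"
    by (rule Sum_any.distrib[OF TV_fin fin2])
  also have "Sum_any (\<lambda>\<alpha>. ?c * TV n (Suc d) (y / q) (\<alpha> - 1)) = ?c * Sum_any (TV n (Suc d) (y / q))"
    by (simp add: SA_cmult SA_shift_minus[of "TV n (Suc d) (y / q)"])
  finally have main: "(1 - E (int n + 1)) * Sum_any (TV (Suc n) d y) =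
      pp (y * E (int d + 1)) (int n) * Q (int n) * Q (int n + int d) +
      ?c * (pp (y / q * E (int (Suc d) + 1)) (int n) * Q (int n) * Q (int n + int (Suc d)))"
    by (simp only: Suc.IH)
  have ee: "y / q * E (int (Suc d) + 1) = y * E (int d + 1)"
  proof -
    have "E (int (Suc d) + 1) = E (int d + 1) * q" using E_add[of "int d + 1" 1] by simp
    then show ?thesis using qnz by simp
  qed
  have ppS: "pp (y * E (int d + 1)) (int n + 1) = pp (y * E (int d + 1)) (int n) * (1 - y * E (int n + int d + 1))"
  proof -
    have "pp (y * E (int d + 1)) (int n + 1) = pp (y * E (int d + 1)) (int n) * (1 - y * E (int d + 1) * E (int n))"
      by (rule pp_Suc) simp
    moreover have "E (int d + 1) * E (int n) = E (int n + int d + 1)" by (rule E_mult2) simp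
    ultimately show ?thesis by (simp only: mult.assoc)
  qed
  have qa: "Q (int n) = (1 - E (int n + 1)) * Q (int n + 1)" by (rule Q_rec)
  have qb: "Q (int n + int d) = (1 - E (int n + int d + 1)) * Q (int n + int d + 1)"
    using Q_rec[of "int n + int d"] by simp
  have "E (int n + 1) = q ^ Suc n" using E_nat[of "Suc n"] by (simp add: add.commute)
  then have nz: "1 - E (int n + 1) \<noteq> 0"
    using one_minus_qpow_nz[of "Suc n"] by simp
  have "(1 - E (int n + 1)) * Sum_any (TV (Suc n) d y) =
      (1 - E (int n + 1)) * (pp (y * E (int d + 1)) (int n + 1) * Q (int n + 1) * Q (int n + 1 + int d))"
    unfolding main ee ppS qa qb by (simp add: algebra_simps)
  then show ?case using nz by (simp add: add.commute)
qed

lemma pascalQ: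
  "(1 - E (A + 1)) * (Q s * Q (A + 1 - s)) = Q s * Q (A - s) + E (A + 1 - s) * (Q (s - 1) * Q (A + 1 - s))"
proof -
  have q1: "Q (A - s) = (1 - E (A + 1 - s)) * Q (A + 1 - s)"
    using Q_rec[of "A - s"] by (simp add: algebra_simps)
  have q2: "Q (s - 1) = (1 - E s) * Q s" using Q_rec'[of s] .
  have e: "E (A + 1 - s) * E s = E (A + 1)" by (rule E_mult2) simp
  show ?thesis unfolding q1 q2 e[symmetric] by (simp add: algebra_simps)
qed

lemma pp_shift: "k \<ge> 0 \<Longrightarrow> pp z (k + 1) = (1 - z) * pp (z * q) k"
proof -
  assume k: "k \<ge> 0"
  have "pp z (k + 1) = (\<Prod>j<Suc (nat k). (1 - z * q ^ j))"
    using k by (simp add: pp_def nat_add_distrib)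
  also have "\<dots> = (1 - z) * (\<Prod>j<nat k. (1 - z * q ^ Suc j))"
    by (subst prod.lessThan_Suc_shift) simp
  also have "\<dots> = (1 - z) * pp (z * q) k"
    by (simp add: pp_def mult.assoc)
  finally show ?thesis .
qed

lemma E_Suc: "E (n + 1) = E n * q"
  using E_add[of n 1] by simp

lemma E_natpow: "s \<ge> 0 \<Longrightarrow> E s = q ^ nat s" by (rule E_nat')

definition TP :: "nat \<Rightarrow> nat \<Rightarrow> 'a \<Rightarrow> int \<Rightarrow> 'a" where
  "TP A B x s = x ^ nat s * E (s * s) * pp (x * E (s + 1)) (int B - s) * Q s * Q (int A - s) * Q (int B - s)"

lemma TP_supp: "TP A B x s \<noteq> 0 \<Longrightarrow> 0 \<le> s \<and> s \<le> int A"
  unfolding TP_def by (metis Q_neg diff_ge_0_iff_ge mult_zero_left mult_zero_right not_le)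

lemma TP_fin: "finite {s. TP A B x s \<noteq> 0}"
  by (rule SA_fin[of _ 0 "int A"]) (rule TP_supp)

lemma TP_B0: "Sum_any (TP A 0 x) = Q (int A)"
proof -
  have "Sum_any (TP A 0 x) = TP A 0 x 0"
  proof (rule SA_single)
    fix s :: int assume "s \<noteq> 0"
    then show "TP A 0 x s = 0" by (cases "s < 0") (auto simp: TP_def Q_neg)
  qed
  then show ?thesis by (simp add: TP_def)
qed

lemma TP_step2:
  "x ^ nat (t + 1) * E ((t + 1) * (t + 1)) * pp (x * E (t + 1 + 1)) (int (Suc B) - (t + 1)) *
     Q (int (Suc B) - (t + 1)) * (E (int A + 1 - (t + 1)) * (Q (t + 1 - 1) * Q (int A + 1 - (t + 1))))
   = x * E (int A + 1) * TP A B (x * q) t"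
proof (cases "t < 0")
  case True then show ?thesis by (simp add: TP_def Q_neg)
next
  case False
  then have t0: "t \<ge> 0" by simp
  have xp: "x ^ nat (t + 1) = x * x ^ nat t" using t0 by (simp add: nat_add_distrib)
  have xq: "(x * q) ^ nat t = x ^ nat t * E t" using t0 by (simp add: E_natpow power_mult_distrib)
  have e: "E ((t + 1) * (t + 1)) * E (int A + 1 - (t + 1)) = E (int A + 1) * (E t * E (t * t))"
    by (simp add: E_add[symmetric] algebra_simps)
  have p: "x * E (t + 1 + 1) = x * q * E (t + 1)" by (simp only: E_Suc[of "t + 1"]) (simp add: algebra_simps)
  have b: "int (Suc B) - (t + 1) = int B - t" by simp
  show ?thesis unfolding TP_def xp xq p b
    by (simp add: Esimps field_simps power2_eq_square)
qed

lemma PVc: "Sum_any (TP A B x) = pp (x * E (int A + 1)) (int B) * Q (int A) * Q (int B)"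
proof (induction A arbitrary: B x)
  case 0
  have "Sum_any (TP 0 B x) = TP 0 B x 0"
    by (rule SA_single) (use TP_supp in fastforce)
  then show ?case by (simp add: TP_def)
next
  case (Suc A)
  show ?case
  proof (cases B)
    case 0 then show ?thesis by (simp add: TP_B0)
  next
    case (Suc B')
    let ?c = "x * E (int A + 1)"
    have pw: "(1 - E (int A + 1)) * TP (Suc A) B x s = TP A B x s + ?c * TP A B' (x * q) (s - 1)" for s
    proof -
      have "(1 - E (int A + 1)) * TP (Suc A) B x s =
          x ^ nat s * E (s * s) * pp (x * E (s + 1)) (int B - s) * Q (int B - s) *
            ((1 - E (int A + 1)) * (Q s * Q (int A + 1 - s)))"
        by (simp add: TP_def algebra_simps)
      also have "\<dots> = TP A B x s +
          x ^ nat s * E (s * s) * pp (x * E (s + 1)) (int B - s) * Q (int B - s) *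
            (E (int A + 1 - s) * (Q (s - 1) * Q (int A + 1 - s)))"
        unfolding pascalQ by (simp add: TP_def algebra_simps)
      also have "x ^ nat s * E (s * s) * pp (x * E (s + 1)) (int B - s) * Q (int B - s) *
            (E (int A + 1 - s) * (Q (s - 1) * Q (int A + 1 - s))) = ?c * TP A B' (x * q) (s - 1)"
        using TP_step2[of x "s - 1" B' A] Suc by simp
      finally show ?thesis .
    qed
    have fin2: "finite {s. ?c * TP A B' (x * q) (s - 1) \<noteq> 0}"
      by (rule SA_fin[of _ 1 "int A + 1"]) (use TP_supp in fastforce)
    have "(1 - E (int A + 1)) * Sum_any (TP (Suc A) B x) = Sum_any (\<lambda>s. (1 - E (int A + 1)) * TP (Suc A) B x s)"
      by (simp only: SA_cmult)
    also have "\<dots> = Sum_any (\<lambda>s. TP A B x s + ?c * TP A B' (x * q) (s - 1))"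
      by (simp only: pw)
    also have "\<dots> = Sum_any (TP A B x) + Sum_any (\<lambda>s. ?c * TP A B' (x * q) (s - 1))"
      by (rule Sum_any.distrib[OF TP_fin fin2])
    also have "Sum_any (\<lambda>s. ?c * TP A B' (x * q) (s - 1)) = ?c * Sum_any (TP A B' (x * q))"
      by (simp only: SA_cmult SA_shift_minus[of "TP A B' (x * q)"])
    finally have "(1 - E (int A + 1)) * Sum_any (TP (Suc A) B x) = pp (x * E (int A + 1)) (int B) * Q (int A) * Q (int B) +
        ?c * (pp (x * q * E (int A + 1)) (int B') * Q (int A) * Q (int B'))"
      by (simp only: Suc.IH)
    also have "\<dots> = (1 - E (int A + 1)) * (pp (x * E (int (Suc A) + 1)) (int B) * Q (int (Suc A)) * Q (int B))"
    proof -
      have b: "int B = int B' + 1" using Suc by simp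
      have pa: "pp (x * E (int A + 1)) (int B' + 1) = (1 - x * E (int A + 1)) * pp (x * q * E (int A + 1)) (int B')"
        using pp_shift[of "int B'" "x * E (int A + 1)"] by (simp add: algebra_simps)
      have pb: "pp (x * E (int (Suc A) + 1)) (int B' + 1) = pp (x * q * E (int A + 1)) (int B') * (1 - x * E (int A + 1) * E (int B' + 1))"
      proof -
        have xe: "x * E (int (Suc A) + 1) = x * q * E (int A + 1)" by (simp add: Esimps field_simps power2_eq_square)
        have pS: "pp (x * q * E (int A + 1)) (int B' + 1) = pp (x * q * E (int A + 1)) (int B') * (1 - x * q * E (int A + 1) * E (int B'))"
          by (rule pp_Suc) simp
        have e3: "x * q * E (int A + 1) * E (int B') = x * E (int A + 1) * E (int B' + 1)"
          by (simp add: Esimps field_simps)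
        show ?thesis by (simp only: xe pS e3)
      qed
      have qa: "Q (int A) = (1 - E (int A + 1)) * Q (int (Suc A))"
        using Q_rec[of "int A"] by (simp add: add.commute)
      have qb: "Q (int B') = (1 - E (int B' + 1)) * Q (int B' + 1)" by (rule Q_rec)
      show ?thesis unfolding b pa pb qa qb by (simp add: algebra_simps)
    qed
    finally have "(1 - E (int A + 1)) * Sum_any (TP (Suc A) B x) =
        (1 - E (int A + 1)) * (pp (x * E (int (Suc A) + 1)) (int B) * Q (int (Suc A)) * Q (int B))" .
    moreover have "1 - E (int A + 1) \<noteq> 0"
    proof -
      have "E (int A + 1) = q ^ Suc A" using E_nat[of "Suc A"] by (simp add: add.commute)
      then show ?thesis using one_minus_qpow_nz[of "Suc A"] by simp
    qed
    ultimately show ?thesis by simp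
  qed
qed

definition T0 :: "nat \<Rightarrow> 'a \<Rightarrow> int \<Rightarrow> 'a" where
  "T0 A x s = x ^ nat s * E (s * s) * pp (x * E (s + 1)) (int A - s) * Q s * Q (int A - s)"

lemma T0_supp: "T0 A x s \<noteq> 0 \<Longrightarrow> 0 \<le> s \<and> s \<le> int A"
  unfolding T0_def by (metis Q_neg diff_ge_0_iff_ge mult_zero_left mult_zero_right not_le)

lemma T0_fin: "finite {s. T0 A x s \<noteq> 0}"
  by (rule SA_fin[of _ 0 "int A"]) (rule T0_supp)

lemma T0_step:
  "(1 - E (int A + 1)) * T0 (Suc A) x s =
     (1 - x * E (int A + 1)) * T0 A x s + x * E (int A + 1) * T0 A (x * q) (s - 1)"
proof -
  have "(1 - E (int A + 1)) * T0 (Suc A) x s =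
      x ^ nat s * E (s * s) * pp (x * E (s + 1)) (int A + 1 - s) * ((1 - E (int A + 1)) * (Q s * Q (int A + 1 - s)))"
    by (simp add: T0_def algebra_simps)
  also have "\<dots> = x ^ nat s * E (s * s) * pp (x * E (s + 1)) (int A + 1 - s) * (Q s * Q (int A - s)) +
      x ^ nat s * E (s * s) * pp (x * E (s + 1)) (int A + 1 - s) * (E (int A + 1 - s) * (Q (s - 1) * Q (int A + 1 - s)))"
    unfolding pascalQ by (simp add: algebra_simps)
  also have "x ^ nat s * E (s * s) * pp (x * E (s + 1)) (int A + 1 - s) * (Q s * Q (int A - s)) =
      (1 - x * E (int A + 1)) * T0 A x s"
  proof (cases "int A - s \<ge> 0")
    case True
    have "pp (x * E (s + 1)) (int A - s + 1) = pp (x * E (s + 1)) (int A - s) * (1 - x * E (s + 1) * E (int A - s))"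
      by (rule pp_Suc[OF True])
    moreover have "x * E (s + 1) * E (int A - s) = x * E (int A + 1)" by (simp add: Esimps field_simps)
    have eq: "int A + 1 - s = int A - s + 1" by simp
    have ee: "x * E (s + 1) * E (int A - s) = x * E (int A + 1)" by (simp add: Esimps field_simps)
    have ppf: "pp (x * E (s + 1)) (int A + 1 - s) = pp (x * E (s + 1)) (int A - s) * (1 - x * E (int A + 1))"
      by (simp only: eq pp_Suc[OF True] ee)
    show ?thesis unfolding T0_def ppf by (simp add: algebra_simps)
  next
    case False then show ?thesis by (simp add: T0_def Q_neg)
  qed
  also have "x ^ nat s * E (s * s) * pp (x * E (s + 1)) (int A + 1 - s) * (E (int A + 1 - s) * (Q (s - 1) * Q (int A + 1 - s))) =
      x * E (int A + 1) * T0 A (x * q) (s - 1)"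
  proof (cases "s \<ge> 1")
    case True
    have "nat s = Suc (nat (s - 1))" using True by simp
    then have xp: "x ^ nat s = x * x ^ nat (s - 1)" by simp
    have xq: "(x * q) ^ nat (s - 1) = x ^ nat (s - 1) * E (s - 1)" using True by (simp add: E_natpow power_mult_distrib)
    have p: "x * q * E (s - 1 + 1) = x * E (s + 1)" by (simp add: Esimps field_simps)
    have b: "int A - (s - 1) = int A + 1 - s" by simp
    show ?thesis unfolding T0_def xp xq p b by (simp add: Esimps field_simps power2_eq_square)
  next
    case False then show ?thesis by (simp add: T0_def Q_neg)
  qed
  finally show ?thesis .
qed

lemma V0c: "Sum_any (T0 A x) = Q (int A)"
proof (induction A arbitrary: x)
  case 0
  have "Sum_any (T0 0 x) = T0 0 x 0"
    by (rule SA_single) (use T0_supp in fastforce)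
  then show ?case by (simp add: T0_def)
next
  case (Suc A)
  let ?c = "x * E (int A + 1)"
  have fin1: "finite {s. (1 - ?c) * T0 A x s \<noteq> 0}"
    by (rule SA_fin[of _ 0 "int A"]) (use T0_supp in fastforce)
  have fin2: "finite {s. ?c * T0 A (x * q) (s - 1) \<noteq> 0}"
    by (rule SA_fin[of _ 1 "int A + 1"]) (use T0_supp in fastforce)
  have "(1 - E (int A + 1)) * Sum_any (T0 (Suc A) x) = Sum_any (\<lambda>s. (1 - E (int A + 1)) * T0 (Suc A) x s)"
    by (simp only: SA_cmult)
  also have "\<dots> = Sum_any (\<lambda>s. (1 - ?c) * T0 A x s + ?c * T0 A (x * q) (s - 1))"
    by (simp only: T0_step)
  also have "\<dots> = Sum_any (\<lambda>s. (1 - ?c) * T0 A x s) + Sum_any (\<lambda>s. ?c * T0 A (x * q) (s - 1))"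
    by (rule Sum_any.distrib[OF fin1 fin2])
  also have "Sum_any (\<lambda>s. ?c * T0 A (x * q) (s - 1)) = ?c * Sum_any (T0 A (x * q))"
    by (simp only: SA_cmult SA_shift_minus[of "T0 A (x * q)"])
  also have "Sum_any (\<lambda>s. (1 - ?c) * T0 A x s) = (1 - ?c) * Sum_any (T0 A x)"
    by (simp only: SA_cmult)
  finally have "(1 - E (int A + 1)) * Sum_any (T0 (Suc A) x) = (1 - ?c) * Q (int A) + ?c * Q (int A)"
    by (simp only: Suc.IH)
  also have "\<dots> = (1 - E (int A + 1)) * Q (int (Suc A))"
    using Q_rec[of "int A"] by (simp add: algebra_simps)
  finally have "(1 - E (int A + 1)) * Sum_any (T0 (Suc A) x) = (1 - E (int A + 1)) * Q (int (Suc A))" .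
  moreover have "1 - E (int A + 1) \<noteq> 0"
  proof -
    have "E (int A + 1) = q ^ Suc A" using E_nat[of "Suc A"] by (simp add: add.commute)
    then show ?thesis using one_minus_qpow_nz[of "Suc A"] by simp
  qed
  ultimately show ?case by simp
qed

lemma pp_add: "k1 \<ge> 0 \<Longrightarrow> k2 \<ge> 0 \<Longrightarrow> pp z (k1 + k2) = pp z k1 * pp (z * E k1) k2"
proof -
  assume k1: "k1 \<ge> 0" and k2: "k2 \<ge> 0"
  obtain n where n: "k2 = int n" using k2 by (metis nonneg_eq_int)
  show ?thesis unfolding n
  proof (induction n)
    case 0 then show ?case by simp
  next
    case (Suc n)
    have e1: "k1 + int (Suc n) = (k1 + int n) + 1" by simp
    have e2: "int (Suc n) = int n + 1" by simp
    have "pp z (k1 + int (Suc n)) = pp z (k1 + int n) * (1 - z * E (k1 + int n))"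
      unfolding e1 by (rule pp_Suc) (use k1 in simp)
    also have "\<dots> = pp z k1 * (pp (z * E k1) (int n) * (1 - z * E k1 * E (int n)))"
      by (simp add: Suc.IH E_add algebra_simps)
    also have "pp (z * E k1) (int n) * (1 - z * E k1 * E (int n)) = pp (z * E k1) (int (Suc n))"
      unfolding e2 by (rule pp_Suc[symmetric]) simp
    finally show ?case .
  qed
qed

lemma pim_pp: "k \<ge> 0 \<Longrightarrow> pp (c * E (m - k + 1)) k = pim (c * E m) k"
proof -
  assume "k \<ge> 0"
  then obtain n where n: "k = int n" by (metis nonneg_eq_int)
  show ?thesis unfolding n
  proof (induction n)
    case 0 then show ?case by simp
  next
    case (Suc n)
    have e1: "int (Suc n) = int n + 1" by simp
    have e2: "m - (int n + 1) + 1 = m - int n" by simp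
    have e3: "c * E (m - int n) * q = c * E (m - int n + 1)" by (simp add: E_Suc)
    have A: "pp (c * E (m - int (Suc n) + 1)) (int (Suc n)) = (1 - c * E (m - int n)) * pp (c * E (m - int n + 1)) (int n)"
      unfolding e1 e2 pp_shift[of "int n" "c * E (m - int n)", OF of_nat_0_le_iff] e3 by (rule refl)
    have e4: "c * E m * E (- int n) = c * E (m - int n)" by (simp add: Esimps)
    have B: "pim (c * E m) (int (Suc n)) = pim (c * E m) (int n) * (1 - c * E (m - int n))"
      unfolding pim_def nat_int e4[symmetric] by simp
    show ?case unfolding A B Suc.IH by (simp only: mult.commute)
  qed
qed

lemma TV_nat_cases: "n < 0 \<Longrightarrow> Q (n - \<alpha>) * Q \<alpha> = 0"
  by (cases "\<alpha> < 0") (auto simp: Q_neg)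

lemma VA:
  "Sum_any (\<lambda>\<alpha>. E (\<alpha> * (\<alpha> + d)) * Q \<alpha> * Q (\<alpha> + d) * Q (n - \<alpha>) * pp (c * E (m - \<alpha> + 1)) (\<alpha> + d))
     = pp (c * E (m + 1)) (n + d) * Q n * Q (n + d)"
proof (cases "n < 0")
  case True
  have z: "(\<lambda>\<alpha>. E (\<alpha> * (\<alpha> + d)) * Q \<alpha> * Q (\<alpha> + d) * Q (n - \<alpha>) * pp (c * E (m - \<alpha> + 1)) (\<alpha> + d)) = (\<lambda>_. 0)"
  proof
    fix \<alpha> show "E (\<alpha> * (\<alpha> + d)) * Q \<alpha> * Q (\<alpha> + d) * Q (n - \<alpha>) * pp (c * E (m - \<alpha> + 1)) (\<alpha> + d) = 0"
      using True by (cases "\<alpha> < 0") (simp_all add: Q_neg)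
  qed
  show ?thesis unfolding z using True by (simp add: Q_neg)
next
  case False
  then obtain N where N: "n = int N" by (metis nonneg_eq_int not_less)
  show ?thesis
  proof (cases "d \<ge> 0")
    case True
    then obtain D where D: "d = int D" by (metis nonneg_eq_int)
    have pw: "E (\<alpha> * (\<alpha> + d)) * Q \<alpha> * Q (\<alpha> + d) * Q (n - \<alpha>) * pp (c * E (m - \<alpha> + 1)) (\<alpha> + d)
        = pp (c * E (m + 1)) d * TV N D (c * E m) \<alpha>" for \<alpha>
    proof (cases "\<alpha> \<ge> 0")
      case True
      have pa1: "pp (c * E (m - \<alpha> + 1)) (\<alpha> + d) = pp (c * E (m - \<alpha> + 1)) \<alpha> * pp (c * E (m - \<alpha> + 1) * E \<alpha>) d"
        by (rule pp_add[OF True \<open>d \<ge> 0\<close>])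
      have pa2: "c * E (m - \<alpha> + 1) * E \<alpha> = c * E (m + 1)" by (simp add: Esimps field_simps)
      have pa: "pp (c * E (m - \<alpha> + 1)) (\<alpha> + d) = pim (c * E m) \<alpha> * pp (c * E (m + 1)) d"
        by (simp only: pa1 pa2 pim_pp[OF True, of c m])
      show ?thesis unfolding pa unfolding TV_def N D by (simp only: mult_ac)
    next
      case False then show ?thesis by (simp add: TV_def Q_neg)
    qed
    have ppc: "pp (c * E m * E (int D + 1)) (int N) * pp (c * E (m + 1)) d = pp (c * E (m + 1)) (n + d)"
    proof -
      have f1: "pp (c * E (m + 1)) (d + n) = pp (c * E (m + 1)) d * pp (c * E (m + 1) * E d) n"
        by (rule pp_add) (use True N in auto)
      have f2: "c * E (m + 1) * E d = c * E m * E (int D + 1)" by (simp add: Esimps field_simps D)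
      have f3: "n + d = d + n" by simp
      show ?thesis unfolding f3 unfolding f1 f2 unfolding N by (simp only: mult.commute)
    qed
    have "Sum_any (\<lambda>\<alpha>. E (\<alpha> * (\<alpha> + d)) * Q \<alpha> * Q (\<alpha> + d) * Q (n - \<alpha>) * pp (c * E (m - \<alpha> + 1)) (\<alpha> + d))
        = Sum_any (\<lambda>\<alpha>. pp (c * E (m + 1)) d * TV N D (c * E m) \<alpha>)" by (simp only: pw)
    also have "\<dots> = pp (c * E (m + 1)) d * Sum_any (TV N D (c * E m))" by (rule SA_cmult)
    also have "\<dots> = pp (c * E (m + 1)) d * (pp (c * E m * E (int D + 1)) (int N) * Q (int N) * Q (int N + int D))"
      by (simp only: VAc)
    also have "\<dots> = pp (c * E (m + 1)) (n + d) * Q n * Q (n + d)"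
      unfolding ppc[symmetric] unfolding N D by (simp only: mult_ac)
    finally show ?thesis .
  next
    case False
    define e where "e = - d"
    then have e0: "e > 0" using False by simp
    then obtain D where D: "e = int D" by (metis less_imp_le nonneg_eq_int)
    have sh: "Sum_any (\<lambda>\<alpha>. E (\<alpha> * (\<alpha> + d)) * Q \<alpha> * Q (\<alpha> + d) * Q (n - \<alpha>) * pp (c * E (m - \<alpha> + 1)) (\<alpha> + d))
        = Sum_any (\<lambda>\<beta>. E ((\<beta> + e) * \<beta>) * Q (\<beta> + e) * Q \<beta> * Q (n - e - \<beta>) * pp (c * E (m - e - \<beta> + 1)) \<beta>)"
      by (subst SA_shift[symmetric, of _ e]) (simp add: e_def algebra_simps)
    show ?thesis
    proof (cases "n - e < 0")
      case True
      have z: "(\<lambda>\<beta>. E ((\<beta> + e) * \<beta>) * Q (\<beta> + e) * Q \<beta> * Q (n - e - \<beta>) * pp (c * E (m - e - \<beta> + 1)) \<beta>) = (\<lambda>_. 0)"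
      proof
        fix \<beta> show "E ((\<beta> + e) * \<beta>) * Q (\<beta> + e) * Q \<beta> * Q (n - e - \<beta>) * pp (c * E (m - e - \<beta> + 1)) \<beta> = 0"
          using True by (cases "\<beta> < 0") (simp_all add: Q_neg)
      qed
      have "Q (n + d) = 0" using True by (simp add: e_def Q_neg)
      then show ?thesis unfolding sh z by simp
    next
      case False
      then obtain N' where N': "n - e = int N'" by (metis nonneg_eq_int not_less)
      have pw: "E ((\<beta> + e) * \<beta>) * Q (\<beta> + e) * Q \<beta> * Q (n - e - \<beta>) * pp (c * E (m - e - \<beta> + 1)) \<beta>
          = TV N' D (c * E (m - e)) \<beta>" for \<beta>
      proof (cases "\<beta> \<ge> 0")
        case True
        have ppf: "pp (c * E (m - e - \<beta> + 1)) \<beta> = pim (c * E (m - e)) \<beta>" by (rule pim_pp[OF True])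
        have qn: "Q (n - e - \<beta>) = Q (int N' - \<beta>)" by (simp only: N')
        show ?thesis unfolding TV_def ppf qn unfolding D by (simp only: mult_ac)
      next
        case False then show ?thesis by (simp add: TV_def Q_neg)
      qed
      have ef: "c * E (m - e) * E (int D + 1) = c * E (m + 1)" by (simp add: Esimps field_simps D)
      have h1: "n + d = int N'" using N' by (simp add: e_def)
      have h2: "n = int N' + int D" using N' D by simp
      show ?thesis unfolding sh pw VAc ef unfolding h1 unfolding h2 by (simp only: mult_ac)
    qed
  qed
qed

end

locale qa = qs +
  fixes a :: 'a
  assumes agen: "\<And>n::nat. n \<ge> 1 \<Longrightarrow> a * q ^ n \<noteq> 1"
begin

definition Ra :: "int \<Rightarrow> 'a" where "Ra n = 1 / qpoch (a * q) q n"

lemma Ra_nonneg: "n \<ge> 0 \<Longrightarrow> Ra n = inverse (\<Prod>j<nat n. (1 - a * q * q ^ j))"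
  by (simp add: Ra_def qpoch_def divide_inverse)

lemma Ra_nonpos: "n \<le> 0 \<Longrightarrow> Ra n = (\<Prod>j\<in>{1..nat (- n)}. (1 - a * q * q powi (- int j)))"
proof (cases "n = 0")
  case True then show ?thesis by (simp add: Ra_def qpoch_def)
next
  case False
  assume "n \<le> 0"
  with False have "\<not> 0 \<le> n" by simp
  then show ?thesis by (simp add: Ra_def qpoch_def divide_inverse)
qed

lemma aprod_nz: "(\<Prod>j<k. (1 - a * q * q ^ j)) \<noteq> 0"
proof -
  have "\<And>j. a * q * q ^ j \<noteq> 1"
  proof -
    fix j :: nat
    have "a * q ^ Suc j \<noteq> 1" by (rule agen) simp
    then show "a * q * q ^ j \<noteq> 1" by (simp add: mult.assoc)
  qed
  then show ?thesis by (simp add: prod_zero_iff)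
qed

lemma Ra_nz: "n \<ge> 0 \<Longrightarrow> Ra n \<noteq> 0"
  using aprod_nz by (simp add: Ra_nonneg)

lemma Ra_0[simp]: "Ra 0 = 1" by (simp add: Ra_def qpoch_def)

lemma Ra_rec: "Ra n = (1 - a * E (n + 1)) * Ra (n + 1)"
proof (cases "n \<ge> 0")
  case True
  have nn: "nat (n + 1) = Suc (nat n)" using True by simp
  have e: "a * E (n + 1) = a * q * q ^ nat n"
    using True E_natpow[of "n + 1"] nn by (simp add: mult.assoc)
  have nz: "1 - a * q * q ^ nat n \<noteq> 0"
  proof -
    have "a * q ^ Suc (nat n) \<noteq> 1" by (rule agen) simp
    then show ?thesis by (simp add: mult.assoc)
  qed
  show ?thesis using True nz aprod_nz[of "nat n"]
    by (simp add: Ra_nonneg nn e del: of_nat_Suc)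
next
  case False
  then have n1: "n + 1 \<le> 0" by simp
  define k where "k = nat (- (n + 1))"
  have k: "nat (- n) = Suc k" using False unfolding k_def by simp
  have k2: "nat (- (n + 1)) = k" unfolding k_def ..
  have e: "a * q * q powi (- int (Suc k)) = a * E (n + 1)"
  proof -
    have "int (Suc k) = - n" using k False by simp
    then have "- int (Suc k) = n" by simp
    then have "q * q powi (- int (Suc k)) = E (n + 1)" by (simp add: E_def power_int_add qnz)
    then show ?thesis by (simp add: mult.assoc)
  qed
  have "Ra n = (\<Prod>j\<in>{1..Suc k}. (1 - a * q * q powi (- int j)))"
    using False k by (simp add: Ra_nonpos)
  also have "\<dots> = (\<Prod>j\<in>{1..k}. (1 - a * q * q powi (- int j))) * (1 - a * q * q powi (- int (Suc k)))"
    by simp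
  also have "(\<Prod>j\<in>{1..k}. (1 - a * q * q powi (- int j))) = Ra (n + 1)"
    using n1 k2 by (simp add: Ra_nonpos)
  finally show ?thesis unfolding e by (simp add: mult.commute)
qed

lemma Ra_pp: "k \<ge> 0 \<Longrightarrow> Ra n = pp (a * E (n + 1)) k * Ra (n + k)"
proof -
  assume "k \<ge> 0"
  then obtain K where K: "k = int K" by (metis nonneg_eq_int)
  show ?thesis unfolding K
  proof (induction K arbitrary: n)
    case 0 then show ?case by simp
  next
    case (Suc K)
    have e1: "int (Suc K) = int K + 1" by simp
    have "Ra n = (1 - a * E (n + 1)) * Ra (n + 1)" by (rule Ra_rec)
    also have "Ra (n + 1) = pp (a * E (n + 1 + 1)) (int K) * Ra (n + 1 + int K)" by (rule Suc.IH)
    also have "a * E (n + 1 + 1) = a * E (n + 1) * q" by (simp only: E_Suc[of "n + 1"] mult.assoc)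
    also have "(1 - a * E (n + 1)) * (pp (a * E (n + 1) * q) (int K) * Ra (n + 1 + int K)) =
        pp (a * E (n + 1)) (int K + 1) * Ra (n + (int K + 1))"
      unfolding pp_shift[of "int K" "a * E (n + 1)", OF of_nat_0_le_iff] by (simp add: algebra_simps)
    finally show ?case unfolding e1 .
  qed
qed

lemma pow_aE: "s \<ge> 0 \<Longrightarrow> (a * E m) ^ nat s = a ^ nat s * E (m * s)"
proof -
  assume s: "s \<ge> 0"
  have "E m ^ nat s = E (m * s)" using s by (simp add: E_def power_int_mult power_int_of_nat[symmetric])
  then show ?thesis by (simp add: power_mult_distrib)
qed

lemma PVpsi:
  "Sum_any (\<lambda>s. a ^ nat s * E (m * s + s * s) * Ra (m + s) * Q s * Q (int A - s) * Q (int B - s))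
     = Ra (m + int B) * pp (a * E (m + int A + 1)) (int B) * Q (int A) * Q (int B)"
proof -
  have pw: "a ^ nat s * E (m * s + s * s) * Ra (m + s) * Q s * Q (int A - s) * Q (int B - s)
      = Ra (m + int B) * TP A B (a * E m) s" for s
  proof (cases "0 \<le> s \<and> s \<le> int B")
    case True
    have r: "Ra (m + s) = pp (a * E (m + s + 1)) (int B - s) * Ra (m + s + (int B - s))"
      by (rule Ra_pp) (use True in simp)
    have e1: "a * E m * E (s + 1) = a * E (m + s + 1)" by (simp add: Esimps field_simps)
    have e2: "E (m * s + s * s) = E (m * s) * E (s * s)" by (simp add: E_add)
    show ?thesis unfolding TP_def r e1 e2 pow_aE[of s m, OF conjunct1[OF True]] using True by (simp add: algebra_simps)
  next
    case False then show ?thesis by (cases "s < 0") (auto simp: TP_def Q_neg)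
  qed
  have e: "a * E m * E (int A + 1) = a * E (m + int A + 1)" by (simp add: Esimps field_simps)
  have "Sum_any (\<lambda>s. a ^ nat s * E (m * s + s * s) * Ra (m + s) * Q s * Q (int A - s) * Q (int B - s))
      = Sum_any (\<lambda>s. Ra (m + int B) * TP A B (a * E m) s)" by (simp only: pw)
  also have "\<dots> = Ra (m + int B) * Sum_any (TP A B (a * E m))" by (rule SA_cmult)
  also have "\<dots> = Ra (m + int B) * pp (a * E (m + int A + 1)) (int B) * Q (int A) * Q (int B)"
    by (simp only: PVc e, simp only: mult.assoc)
  finally show ?thesis .
qed

lemma V0psi:
  "Sum_any (\<lambda>s. a ^ nat s * E (m * s + s * s) * Ra (m + s) * Q s * Q (int A - s))
     = Ra (m + int A) * Q (int A)"
proof -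
  have pw: "a ^ nat s * E (m * s + s * s) * Ra (m + s) * Q s * Q (int A - s)
      = Ra (m + int A) * T0 A (a * E m) s" for s
  proof (cases "0 \<le> s \<and> s \<le> int A")
    case True
    have r: "Ra (m + s) = pp (a * E (m + s + 1)) (int A - s) * Ra (m + s + (int A - s))"
      by (rule Ra_pp) (use True in simp)
    have e1: "a * E m * E (s + 1) = a * E (m + s + 1)" by (simp add: Esimps field_simps)
    have e2: "E (m * s + s * s) = E (m * s) * E (s * s)" by (simp add: E_add)
    show ?thesis unfolding T0_def r e1 e2 pow_aE[of s m, OF conjunct1[OF True]] using True by (simp add: algebra_simps)
  next
    case False then show ?thesis by (cases "s < 0") (auto simp: T0_def Q_neg)
  qed
  have "Sum_any (\<lambda>s. a ^ nat s * E (m * s + s * s) * Ra (m + s) * Q s * Q (int A - s))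
      = Sum_any (\<lambda>s. Ra (m + int A) * T0 A (a * E m) s)" by (simp only: pw)
  also have "\<dots> = Ra (m + int A) * Sum_any (T0 A (a * E m))" by (rule SA_cmult)
  finally show ?thesis by (simp only: V0c)
qed

end

lemma SA_neg:
  fixes f :: "int \<Rightarrow> 'a::comm_monoid_add"
  shows "Sum_any (\<lambda>x. f (c - x)) = Sum_any f"
proof -
  have "bij (\<lambda>x::int. c - x)"
    by (rule bijI) (auto simp: inj_def image_def intro: exI[of _ "c - _"])
  then show ?thesis
    by (rule Sum_any.reindex_cong[symmetric]) (simp add: o_def)
qed

lemma SA_zero:
  assumes "\<And>x. f x = 0"
  shows "Sum_any f = 0"
proof -
  have "f = (\<lambda>_. 0)" using assms by auto
  then show ?thesis by simp
qed

lemma SA_nat_sum: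
  fixes f :: "int \<Rightarrow> 'a::comm_monoid_add"
  assumes "\<And>R. f R \<noteq> 0 \<Longrightarrow> 0 \<le> R \<and> R \<le> int L"
  shows "(\<Sum>r\<le>L. f (int r)) = Sum_any f"
proof -
  have "Sum_any f = sum f {0..int L}"
    by (rule Sum_any.expand_superset) (use assms in auto)
  also have "{0..int L} = int ` {..L}"
  proof
    show "{0..int L} \<subseteq> int ` {..L}"
    proof
      fix x assume x: "x \<in> {0..int L}"
      then have "x = int (nat x)" "nat x \<in> {..L}" by auto
      then show "x \<in> int ` {..L}" by (rule image_eqI)
    qed
  qed auto
  also have "sum f (int ` {..L}) = (\<Sum>r\<le>L. f (int r))"
    by (simp add: sum.reindex)
  finally show ?thesis ..
qed

lemma SA_swap:
  fixes g :: "int \<Rightarrow> int \<Rightarrow> 'a::comm_monoid_add"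
  assumes "\<And>x y. g x y \<noteq> 0 \<Longrightarrow> lo1 \<le> x \<and> x \<le> hi1 \<and> lo2 \<le> y \<and> y \<le> hi2"
  shows "Sum_any (\<lambda>x. Sum_any (g x)) = Sum_any (\<lambda>y. Sum_any (\<lambda>x. g x y))"
  by (rule Sum_any.swap[of "{lo1..hi1} \<times> {lo2..hi2}"]) (use assms in fastforce)+

lemma SA_fin_gen:
  fixes f :: "int \<Rightarrow> 'a::zero"
  assumes "\<And>x. f x \<noteq> 0 \<Longrightarrow> lo \<le> x \<and> x \<le> hi"
  shows "finite {x. f x \<noteq> 0}"
  by (rule finite_subset[of _ "{lo..hi}"]) (use assms in auto)

lemma SA_prod2:
  fixes f g :: "int \<Rightarrow> 'a::field"
  assumes "\<And>x. f x \<noteq> 0 \<Longrightarrow> lo1 \<le> x \<and> x \<le> hi1" and "\<And>y. g y \<noteq> 0 \<Longrightarrow> lo2 \<le> y \<and> y \<le> hi2"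
  shows "Sum_any (\<lambda>x. Sum_any (\<lambda>y. f x * g y)) = Sum_any f * Sum_any g"
  by (rule Sum_any_product[symmetric]) (rule SA_fin_gen, use assms in blast)+

context qa
begin

definition Pa :: "int \<Rightarrow> 'a" where "Pa n = qpoch (a * q) q n"

lemma Pa_Ra: "n \<ge> 0 \<Longrightarrow> Pa n * Ra n = 1"
  using Ra_nz[of n] by (simp add: Pa_def Ra_def)

lemma Q_inv: "inverse (qpoch q q n) = Q n"
proof (cases "n \<ge> 0")
  case True then show ?thesis by (simp add: Q_def qpoch_def mult.commute[of q] power_Suc2 del: power_Suc)
next
  case False
  have "(\<Prod>j\<in>{1..nat (- n)}. (1 - q * q powi (- int j))) = 0"
  proof (rule prod_zero)
    show "finite {1..nat (- n)}" by simp
    show "\<exists>j\<in>{1..nat (- n)}. 1 - q * q powi (- int j) = 0"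
      using False qnz by (intro bexI[of _ 1]) (auto simp: power_int_minus)
  qed
  then show ?thesis using False by (simp add: Q_def qpoch_def)
qed

lemma Ra_inv: "inverse (qpoch (a * q) q n) = Ra n"
  by (simp add: Ra_def divide_inverse)

lemma KII_eq: "kernel_II a q L1 L2 (k1, k2, k3) = Pa (int L1 + int L2) * Ra (int L1 + k1) * Ra (int L1 + k2) *
    Q (int L1 + k3) * Q (int L2 - k1) * Q (int L2 - k2) * Ra (int L2 - k3)"
  by (simp add: kernel_II_def divide_inverse inverse_mult_distrib Q_inv Ra_inv Pa_def mult.assoc)

lemma pp_zero: "pp 0 k = 1" by (simp add: pp_def)

lemma expandII:
  assumes w: "w \<ge> 0"
  shows "Pa (i + j + w) * Ra (i + w) * Ra (j + w) * Q i * Q j =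
    Sum_any (\<lambda>l. E ((i - l) * (j - l)) * Q (i - l) * Q (j - l) * Q l * Ra (w + l))"
proof (cases "i \<ge> 0 \<and> j \<ge> 0")
  case False
  have "Sum_any (\<lambda>l. E ((i - l) * (j - l)) * Q (i - l) * Q (j - l) * Q l * Ra (w + l)) = 0"
  proof (rule SA_zero)
    fix l show "E ((i - l) * (j - l)) * Q (i - l) * Q (j - l) * Q l * Ra (w + l) = 0"
      using False by (cases "l < 0") (auto simp: Q_neg)
  qed
  moreover have "Pa (i + j + w) * Ra (i + w) * Ra (j + w) * Q i * Q j = 0" using False by (auto simp: Q_neg)
  ultimately show ?thesis by simp
next
  case True
  have pw: "E ((i - l) * (j - l)) * Q (i - l) * Q (j - l) * Q l * Ra (w + l) =
      Ra (w + j) * (E ((i - l) * (j - l)) * Q (i - l) * Q (j - l) * Q l * pp (a * E (w + l + 1)) (j - l))" for l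
  proof (cases "j - l \<ge> 0")
    case True
    have "Ra (w + l) = pp (a * E (w + l + 1)) (j - l) * Ra (w + l + (j - l))" by (rule Ra_pp[OF True])
    then show ?thesis by (simp add: algebra_simps)
  next
    case False then show ?thesis by (simp add: Q_neg)
  qed
  have "Sum_any (\<lambda>l. E ((i - l) * (j - l)) * Q (i - l) * Q (j - l) * Q l * Ra (w + l)) =
      Ra (w + j) * Sum_any (\<lambda>l. E ((i - l) * (j - l)) * Q (i - l) * Q (j - l) * Q l * pp (a * E (w + l + 1)) (j - l))"
    by (simp only: pw SA_cmult)
  also have "Sum_any (\<lambda>l. E ((i - l) * (j - l)) * Q (i - l) * Q (j - l) * Q l * pp (a * E (w + l + 1)) (j - l)) =
      Sum_any (\<lambda>\<alpha>. E (\<alpha> * (\<alpha> + (j - i))) * Q \<alpha> * Q (\<alpha> + (j - i)) * Q (i - \<alpha>) * pp (a * E ((w + i) - \<alpha> + 1)) (\<alpha> + (j - i)))"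
    by (subst SA_neg[symmetric, of _ i]) (simp add: algebra_simps)
  also have "\<dots> = pp (a * E (w + i + 1)) (i + (j - i)) * Q i * Q (i + (j - i))"
    by (rule VA)
  finally have r: "Sum_any (\<lambda>l. E ((i - l) * (j - l)) * Q (i - l) * Q (j - l) * Q l * Ra (w + l)) =
      Ra (w + j) * (pp (a * E (w + i + 1)) j * Q i * Q j)" by simp
  have "Ra (w + i) = pp (a * E (w + i + 1)) j * Ra (w + i + j)" using True by (intro Ra_pp) simp
  moreover have "Pa (i + j + w) * Ra (w + i + j) = 1" using True w Pa_Ra[of "i + j + w"] by (simp add: add_ac)
  ultimately have "Pa (i + j + w) * Ra (i + w) = pp (a * E (w + i + 1)) j"
    by (simp add: add.commute mult.left_commute)
  then show ?thesis unfolding r by (simp add: algebra_simps)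
qed

lemma isumII:
  assumes l: "l \<ge> 0"
  shows "Sum_any (\<lambda>i. a ^ nat i * E (i * i + i * v - i * l) * Q (M - i) * Ra (i + v) * Q (i - l))
      = a ^ nat l * E (l * v) * Ra (M + v) * Q (M - l)"
proof -
  have pw: "a ^ nat (s + l) * E ((s + l) * (s + l) + (s + l) * v - (s + l) * l) * Q (M - (s + l)) * Ra (s + l + v) * Q (s + l - l)
      = a ^ nat l * E (l * v) * (a ^ nat s * E ((l + v) * s + s * s) * Ra ((l + v) + s) * Q s * Q ((M - l) - s))" for s
  proof (cases "s \<ge> 0")
    case True
    have ap: "a ^ nat (s + l) = a ^ nat s * a ^ nat l" using True l by (simp add: nat_add_distrib power_add)
    have e: "E ((s + l) * (s + l) + (s + l) * v - (s + l) * l) = E (l * v) * E ((l + v) * s + s * s)"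
      by (simp add: E_add[symmetric] algebra_simps)
    show ?thesis unfolding ap e by (simp add: algebra_simps)
  next
    case False then show ?thesis by (simp add: Q_neg)
  qed
  have "Sum_any (\<lambda>i. a ^ nat i * E (i * i + i * v - i * l) * Q (M - i) * Ra (i + v) * Q (i - l)) =
      Sum_any (\<lambda>s. a ^ nat (s + l) * E ((s + l) * (s + l) + (s + l) * v - (s + l) * l) * Q (M - (s + l)) * Ra (s + l + v) * Q (s + l - l))"
    by (rule SA_shift[symmetric])
  also have "\<dots> = a ^ nat l * E (l * v) * Sum_any (\<lambda>s. a ^ nat s * E ((l + v) * s + s * s) * Ra ((l + v) + s) * Q s * Q ((M - l) - s))"
    by (simp only: pw SA_cmult)
  also have "Sum_any (\<lambda>s. a ^ nat s * E ((l + v) * s + s * s) * Ra ((l + v) + s) * Q s * Q ((M - l) - s)) = Ra (M + v) * Q (M - l)"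
  proof (cases "M - l \<ge> 0")
    case True
    then obtain A where A: "M - l = int A" by (metis nonneg_eq_int)
    have "Sum_any (\<lambda>s. a ^ nat s * E ((l + v) * s + s * s) * Ra ((l + v) + s) * Q s * Q (int A - s)) = Ra ((l + v) + int A) * Q (int A)"
      by (rule V0psi)
    moreover have "(l + v) + int A = M + v" using A by simp
    ultimately show ?thesis unfolding A by simp
  next
    case False
    have "Sum_any (\<lambda>s. a ^ nat s * E ((l + v) * s + s * s) * Ra ((l + v) + s) * Q s * Q ((M - l) - s)) = 0"
    proof (rule SA_zero)
      fix s show "a ^ nat s * E ((l + v) * s + s * s) * Ra ((l + v) + s) * Q s * Q ((M - l) - s) = 0"
        using False by (cases "s < 0") (auto simp: Q_neg)
    qed
    then show ?thesis using False by (simp add: Q_neg)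
  qed
  finally show ?thesis by (simp add: mult.assoc)
qed

lemma jsumII:
  shows "Sum_any (\<lambda>j. E (j * j + j * u - j * l) * Q (N - j) * Q (j + u) * Q (j - l))
      = E (l * u) * Q (N - l) * Q (N + u)"
proof -
  have pw: "E ((p + l) * (p + l) + (p + l) * u - (p + l) * l) * Q (N - (p + l)) * Q (p + l + u) * Q (p + l - l)
      = E (l * u) * (E (p * (p + (l + u))) * Q p * Q (p + (l + u)) * Q ((N - l) - p) * pp (0 * E (0 - p + 1)) (p + (l + u)))" for p
  proof -
    have e: "E ((p + l) * (p + l) + (p + l) * u - (p + l) * l) = E (l * u) * E (p * (p + (l + u)))"
      by (simp add: E_add[symmetric] algebra_simps)
    show ?thesis unfolding e by (simp add: pp_zero algebra_simps)
  qed
  have "Sum_any (\<lambda>j. E (j * j + j * u - j * l) * Q (N - j) * Q (j + u) * Q (j - l)) =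
      Sum_any (\<lambda>p. E ((p + l) * (p + l) + (p + l) * u - (p + l) * l) * Q (N - (p + l)) * Q (p + l + u) * Q (p + l - l))"
    by (rule SA_shift[symmetric])
  also have "\<dots> = E (l * u) * Sum_any (\<lambda>p. E (p * (p + (l + u))) * Q p * Q (p + (l + u)) * Q ((N - l) - p) * pp (0 * E (0 - p + 1)) (p + (l + u)))"
    by (simp only: pw SA_cmult)
  also have "Sum_any (\<lambda>p. E (p * (p + (l + u))) * Q p * Q (p + (l + u)) * Q ((N - l) - p) * pp (0 * E (0 - p + 1)) (p + (l + u)))
      = pp (0 * E (0 + 1)) ((N - l) + (l + u)) * Q (N - l) * Q ((N - l) + (l + u))"
    by (rule VA)
  finally show ?thesis by (simp add: pp_zero mult.assoc)
qed

lemma lsumII: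
  assumes "M \<ge> 0" "N \<ge> 0"
  shows "Sum_any (\<lambda>l. a ^ nat l * E (w * l + l * l) * Ra (w + l) * Q l * Q (M - l) * Q (N - l))
     = Ra (w + N) * pp (a * E (w + M + 1)) N * Q M * Q N"
proof -
  obtain A where A: "M = int A" using assms by (metis nonneg_eq_int)
  obtain B where B: "N = int B" using assms by (metis nonneg_eq_int)
  show ?thesis unfolding A B by (rule PVpsi)
qed

lemma typeII_k:
  assumes k: "k2 \<le> k1" "k3 \<le> k2" "k1 + k2 + k3 = 0"
  shows "(\<Sum>r1\<le>L1. \<Sum>r2\<le>L2. a ^ r1 * q powi (int r1 ^ 2 - int r1 * int r2 + int r2 ^ 2) /
            (qpoch q q (int L1 - int r1) * qpoch q q (int L2 - int r2)) * kernel_II a q r1 r2 (k1, k2, k3))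
     = a powi (k1 + k2) * q powi ((k1^2 + k2^2 + k3^2) div 2) * kernel_II a q L1 L2 (k1, k2, k3)"
proof -
  define M where "M = int L1 + k3"
  define N where "N = int L2 - k1"
  define u where "u = k1 - k2"
  define v where "v = k2 - k3"
  define w where "w = k1 - k3"
  have k1p: "k1 \<ge> 0" and k3n: "k3 \<le> 0" using k by linarith+
  have u0: "u \<ge> 0" and v0: "v \<ge> 0" and w0: "w \<ge> 0" and wuv: "w = u + v"
    using k by (simp_all add: u_def v_def w_def)
  define K0 where "K0 = a ^ nat (- k3) * E (k1 * k1 + k1 * k3 + k3 * k3)"
  define F2 where "F2 R1 R2 = a ^ nat R1 * E (R1 * R1 - R1 * R2 + R2 * R2) * Q (int L1 - R1) * Q (int L2 - R2) *
      (Pa (R1 + R2) * Ra (R1 + k1) * Ra (R1 + k2) * Q (R1 + k3) * Q (R2 - k1) * Q (R2 - k2) * Ra (R2 - k3))" for R1 R2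
  have F2_supp: "F2 R1 R2 \<noteq> 0 \<Longrightarrow> 0 \<le> R1 \<and> R1 \<le> int L1 \<and> 0 \<le> R2 \<and> R2 \<le> int L2" for R1 R2
  proof -
    assume nz: "F2 R1 R2 \<noteq> 0"
    then have "Q (int L1 - R1) \<noteq> 0" "Q (int L2 - R2) \<noteq> 0" "Q (R1 + k3) \<noteq> 0" "Q (R2 - k1) \<noteq> 0"
      by (auto simp: F2_def)
    then show ?thesis using k1p k3n by (auto simp: Q_neg not_less[symmetric])
  qed
  have S0: "a ^ r1 * q powi (int r1 ^ 2 - int r1 * int r2 + int r2 ^ 2) /
            (qpoch q q (int L1 - int r1) * qpoch q q (int L2 - int r2)) * kernel_II a q r1 r2 (k1, k2, k3)
        = F2 (int r1) (int r2)" for r1 r2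
    by (simp add: F2_def KII_eq E_def divide_inverse inverse_mult_distrib Q_inv power2_eq_square)
  have S1: "(\<Sum>r1\<le>L1. \<Sum>r2\<le>L2. F2 (int r1) (int r2)) = Sum_any (\<lambda>R1. Sum_any (F2 R1))"
  proof -
    have "(\<Sum>r1\<le>L1. \<Sum>r2\<le>L2. F2 (int r1) (int r2)) = (\<Sum>r1\<le>L1. Sum_any (F2 (int r1)))"
      by (rule sum.cong[OF refl], rule SA_nat_sum) (use F2_supp in blast)
    also have "\<dots> = Sum_any (\<lambda>R1. Sum_any (F2 R1))"
    proof (rule SA_nat_sum)
      fix R1 assume "Sum_any (F2 R1) \<noteq> 0"
      then obtain R2 where "F2 R1 R2 \<noteq> 0" by (rule Sum_any.not_neutral_obtains_not_neutral)
      then show "0 \<le> R1 \<and> R1 \<le> int L1" using F2_supp by blast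
    qed
    finally show ?thesis .
  qed
  have S2: "Sum_any (\<lambda>R1. Sum_any (F2 R1)) = Sum_any (\<lambda>i. Sum_any (\<lambda>j. F2 (i - k3) (j + k1)))"
  proof -
    have "Sum_any (\<lambda>R1. Sum_any (F2 R1)) = Sum_any (\<lambda>i. Sum_any (F2 (i + - k3)))"
      by (rule SA_shift[symmetric])
    also have "\<dots> = Sum_any (\<lambda>i. Sum_any (\<lambda>j. F2 (i - k3) (j + k1)))"
      by (simp only: SA_shift diff_conv_add_uminus)
    finally show ?thesis .
  qed
  define X where "X i j = a ^ nat i * E (i * i - i * j + j * j + i * v + j * u) * Q (M - i) * Q (N - j) * Ra (i + v) * Q (j + u)" for i j
  define Y where "Y i j l = E ((i - l) * (j - l)) * Q (i - l) * Q (j - l) * Q l * Ra (w + l)" for i j l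
  have S3: "F2 (i - k3) (j + k1) = K0 * (X i j * (Pa (i + j + w) * Ra (i + w) * Ra (j + w) * Q i * Q j))" for i j
  proof (cases "i \<ge> 0")
    case True
    have ap: "a ^ nat (i - k3) = a ^ nat i * a ^ nat (- k3)" using True k3n by (simp add: nat_add_distrib[symmetric] power_add[symmetric])
    have k2e: "k2 = - k1 - k3" using k by simp
    have e: "E ((i - k3) * (i - k3) - (i - k3) * (j + k1) + (j + k1) * (j + k1)) =
        E (k1 * k1 + k1 * k3 + k3 * k3) * E (i * i - i * j + j * j + i * v + j * u)"
      by (simp add: E_add[symmetric] u_def v_def k2e algebra_simps)
    have i1: "i - k3 + k1 = i + w" "i - k3 + k2 = i + v" "i - k3 + k3 = i" "j + k1 - k1 = j" "j + k1 - k2 = j + u"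
      "j + k1 - k3 = j + w" "int L1 - (i - k3) = M - i" "int L2 - (j + k1) = N - j" "i - k3 + (j + k1) = i + j + w"
      by (simp_all add: u_def v_def w_def M_def N_def)
    show ?thesis unfolding F2_def ap e i1 X_def K0_def by (simp only: mult_ac)
  next
    case False
    then show ?thesis by (simp add: F2_def Q_neg)
  qed
  define H where "H i j l = X i j * Y i j l" for i j l
  have H_supp: "H i j l \<noteq> 0 \<Longrightarrow> 0 \<le> l \<and> l \<le> i \<and> i \<le> M \<and> l \<le> j \<and> j \<le> N" for i j l
  proof -
    assume "H i j l \<noteq> 0"
    then have "Q (M - i) \<noteq> 0" "Q (N - j) \<noteq> 0" "Q (i - l) \<noteq> 0" "Q (j - l) \<noteq> 0" "Q l \<noteq> 0"
      by (auto simp: H_def X_def Y_def)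
    then show ?thesis by (auto simp: Q_neg not_less[symmetric])
  qed
  have S4: "Sum_any (\<lambda>i. Sum_any (\<lambda>j. F2 (i - k3) (j + k1))) = K0 * Sum_any (\<lambda>i. Sum_any (\<lambda>j. Sum_any (\<lambda>l. H i j l)))"
  proof -
    have "F2 (i - k3) (j + k1) = K0 * Sum_any (\<lambda>l. H i j l)" for i j
      unfolding S3 expandII[OF w0] H_def Y_def by (simp only: SA_cmult)
    then show ?thesis by (simp only: SA_cmult)
  qed
  have S5: "Sum_any (\<lambda>i. Sum_any (\<lambda>j. Sum_any (\<lambda>l. H i j l))) = Sum_any (\<lambda>l. Sum_any (\<lambda>i. Sum_any (\<lambda>j. H i j l)))"
  proof -
    have "Sum_any (\<lambda>j. Sum_any (\<lambda>l. H i j l)) = Sum_any (\<lambda>l. Sum_any (\<lambda>j. H i j l))" for i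
      by (rule SA_swap[of _ 0 N 0 M]) (use H_supp in fastforce)
    then have "Sum_any (\<lambda>i. Sum_any (\<lambda>j. Sum_any (\<lambda>l. H i j l))) = Sum_any (\<lambda>i. Sum_any (\<lambda>l. Sum_any (\<lambda>j. H i j l)))"
      by simp
    also have "\<dots> = Sum_any (\<lambda>l. Sum_any (\<lambda>i. Sum_any (\<lambda>j. H i j l)))"
    proof (rule SA_swap[of _ 0 M 0 M])
      fix i l assume "Sum_any (\<lambda>j. H i j l) \<noteq> 0"
      then obtain j where "H i j l \<noteq> 0" by (rule Sum_any.not_neutral_obtains_not_neutral)
      then show "0 \<le> i \<and> i \<le> M \<and> 0 \<le> l \<and> l \<le> M" using H_supp by fastforce
    qed
    finally show ?thesis .
  qed
  define f where "f l i = a ^ nat i * E (i * i + i * v - i * l) * Q (M - i) * Ra (i + v) * Q (i - l)" for l i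
  define g where "g l j = E (j * j + j * u - j * l) * Q (N - j) * Q (j + u) * Q (j - l)" for l j
  have S6: "Sum_any (\<lambda>i. Sum_any (\<lambda>j. H i j l)) = E (l * l) * Q l * Ra (w + l) * (Sum_any (f l) * Sum_any (g l))" for l
  proof -
    have eH: "E (i * i - i * j + j * j + i * v + j * u) * E ((i - l) * (j - l)) =
        E (i * i + i * v - i * l) * E (j * j + j * u - j * l) * E (l * l)" for i j
      by (simp add: E_add[symmetric] algebra_simps)
    have pw: "H i j l = E (l * l) * Q l * Ra (w + l) * (f l i * g l j)" for i j
    proof -
      have "H i j l = (E (i * i - i * j + j * j + i * v + j * u) * E ((i - l) * (j - l))) *
          (a ^ nat i * Q (M - i) * Q (N - j) * Ra (i + v) * Q (j + u) * Q (i - l) * Q (j - l) * Q l * Ra (w + l))"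
        unfolding H_def X_def Y_def by (simp only: mult_ac)
      also have "\<dots> = (E (i * i + i * v - i * l) * E (j * j + j * u - j * l) * E (l * l)) *
          (a ^ nat i * Q (M - i) * Q (N - j) * Ra (i + v) * Q (j + u) * Q (i - l) * Q (j - l) * Q l * Ra (w + l))"
        by (simp only: eH)
      also have "\<dots> = E (l * l) * Q l * Ra (w + l) * (f l i * g l j)"
        unfolding f_def g_def by (simp only: mult_ac)
      finally show ?thesis .
    qed
    have fs: "f l i \<noteq> 0 \<Longrightarrow> l \<le> i \<and> i \<le> M" for i
      by (auto simp: f_def Q_neg not_less[symmetric])
    have gs: "g l j \<noteq> 0 \<Longrightarrow> l \<le> j \<and> j \<le> N" for j
      by (auto simp: g_def Q_neg not_less[symmetric])
    have "Sum_any (\<lambda>i. Sum_any (\<lambda>j. H i j l)) = E (l * l) * Q l * Ra (w + l) * Sum_any (\<lambda>i. Sum_any (\<lambda>j. f l i * g l j))"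
      by (simp only: pw SA_cmult)
    also have "Sum_any (\<lambda>i. Sum_any (\<lambda>j. f l i * g l j)) = Sum_any (f l) * Sum_any (g l)"
      by (rule SA_prod2[of _ l M _ l N]) (use fs gs in auto)
    finally show ?thesis .
  qed
  have S7: "E (l * l) * Q l * Ra (w + l) * (Sum_any (f l) * Sum_any (g l)) =
      Ra (M + v) * Q (N + u) * (a ^ nat l * E (w * l + l * l) * Ra (w + l) * Q l * Q (M - l) * Q (N - l))" for l
  proof (cases "l \<ge> 0")
    case True
    have fi: "Sum_any (f l) = a ^ nat l * E (l * v) * Ra (M + v) * Q (M - l)"
      unfolding f_def by (rule isumII[OF True])
    have gi: "Sum_any (g l) = E (l * u) * Q (N - l) * Q (N + u)"
      unfolding g_def by (rule jsumII)
    have e: "E (l * l) * (E (l * v) * E (l * u)) = E (w * l + l * l)"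
      by (simp add: E_add[symmetric] wuv algebra_simps)
    show ?thesis unfolding fi gi e[symmetric] by (simp only: mult_ac)
  next
    case False then show ?thesis by (simp add: Q_neg)
  qed
  have lhs: "(\<Sum>r1\<le>L1. \<Sum>r2\<le>L2. a ^ r1 * q powi (int r1 ^ 2 - int r1 * int r2 + int r2 ^ 2) /
            (qpoch q q (int L1 - int r1) * qpoch q q (int L2 - int r2)) * kernel_II a q r1 r2 (k1, k2, k3))
      = K0 * (Ra (M + v) * Q (N + u) * Sum_any (\<lambda>l. a ^ nat l * E (w * l + l * l) * Ra (w + l) * Q l * Q (M - l) * Q (N - l)))"
    by (simp only: S0 S1 S2 S4 S5 S6 S7 SA_cmult)
  have rhs: "a powi (k1 + k2) * q powi ((k1^2 + k2^2 + k3^2) div 2) * kernel_II a q L1 L2 (k1, k2, k3)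
      = K0 * (Pa (M + N + w) * Ra (M + w) * Ra (M + v) * Q M * Q N * Q (N + u) * Ra (N + w))"
  proof -
    have k2e: "k2 = - k1 - k3" using k by simp
    have ap: "a powi (k1 + k2) = a ^ nat (- k3)" using k3n k2e by (simp add: power_int_def)
    have dv: "(k1^2 + k2^2 + k3^2) div 2 = k1 * k1 + k1 * k3 + k3 * k3"
    proof -
      have "k1^2 + k2^2 + k3^2 = 2 * (k1 * k1 + k1 * k3 + k3 * k3)" by (simp add: k2e power2_eq_square algebra_simps)
      then show ?thesis by simp
    qed
    have i1: "int L1 + int L2 = M + N + w" "int L1 + k1 = M + w" "int L1 + k2 = M + v" "int L1 + k3 = M"
      "int L2 - k1 = N" "int L2 - k2 = N + u" "int L2 - k3 = N + w"
      by (simp_all add: M_def N_def u_def v_def w_def)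
    show ?thesis unfolding KII_eq ap dv i1 K0_def E_def[symmetric] by (simp only: mult_ac)
  qed
  show ?thesis
  proof (cases "M \<ge> 0 \<and> N \<ge> 0")
    case True
    have ppe: "pp (a * E (w + M + 1)) N = Pa (M + N + w) * Ra (M + w)"
    proof -
      have "Ra (w + M) = pp (a * E (w + M + 1)) N * Ra (w + M + N)" using True by (intro Ra_pp) simp
      moreover have "Pa (M + N + w) * Ra (w + M + N) = 1" using True w0 Pa_Ra[of "M + N + w"] by (simp add: add_ac)
      ultimately show ?thesis by (simp add: add.commute mult.left_commute)
    qed
    show ?thesis unfolding lhs rhs lsumII[OF conjunct1[OF True] conjunct2[OF True]] ppe
      by (simp add: add.commute mult_ac)
  next
    case False
    have z: "Sum_any (\<lambda>l. a ^ nat l * E (w * l + l * l) * Ra (w + l) * Q l * Q (M - l) * Q (N - l)) = 0"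
    proof (rule SA_zero)
      fix l show "a ^ nat l * E (w * l + l * l) * Ra (w + l) * Q l * Q (M - l) * Q (N - l) = 0"
        using False by (cases "l < 0") (auto simp: Q_neg)
    qed
    have "Q M * Q N = 0" using False by (auto simp: Q_neg)
    then show ?thesis unfolding lhs rhs z by (auto simp: mult_ac)
  qed
qed

end

lemma SA_reindex_inj:
  fixes g :: "'b \<Rightarrow> 'a::comm_monoid_add"
  assumes inj: "inj \<phi>" and rng: "\<And>z. g z \<noteq> 0 \<Longrightarrow> z \<in> range \<phi>"
  shows "Sum_any g = Sum_any (g \<circ> \<phi>)"
proof -
  have "{z. g z \<noteq> 0} = \<phi> ` {x. (g \<circ> \<phi>) x \<noteq> 0}" using rng by auto
  then have "Sum_any g = sum g (\<phi> ` {x. (g \<circ> \<phi>) x \<noteq> 0})" by (simp add: Sum_any.expand_set)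
  also have "\<dots> = sum (g \<circ> \<phi>) {x. (g \<circ> \<phi>) x \<noteq> 0}"
    by (rule sum.reindex) (rule inj_on_subset[OF inj], simp)
  also have "\<dots> = Sum_any (g \<circ> \<phi>)" by (simp add: Sum_any.expand_set)
  finally show ?thesis .
qed

lemma SA_cart:
  fixes g :: "'b \<Rightarrow> 'c \<Rightarrow> 'a::comm_monoid_add"
  assumes "finite A" "finite B" "\<And>x y. g x y \<noteq> 0 \<Longrightarrow> x \<in> A \<and> y \<in> B"
  shows "Sum_any (\<lambda>x. Sum_any (g x)) = Sum_any (\<lambda>(x, y). g x y)"
  by (rule Sum_any.cartesian_product[of "A \<times> B"]) (use assms in auto)

lemma SA4:
  fixes g :: "int \<Rightarrow> int \<Rightarrow> int \<Rightarrow> int \<Rightarrow> 'a::comm_monoid_add"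
  assumes bd: "\<And>x y z t. g x y z t \<noteq> 0 \<Longrightarrow> x \<in> {-B..B} \<and> y \<in> {-B..B} \<and> z \<in> {-B..B} \<and> t \<in> {-B..B}"
  shows "Sum_any (\<lambda>x. Sum_any (\<lambda>y. Sum_any (\<lambda>z. Sum_any (\<lambda>t. g x y z t)))) = Sum_any (\<lambda>(x, y, z, t). g x y z t)"
proof -
  have i1: "Sum_any (\<lambda>z. Sum_any (\<lambda>t. g x y z t)) = Sum_any (\<lambda>(z, t). g x y z t)" for x y
    by (rule SA_cart[of "{-B..B}" "{-B..B}"]) (use bd in auto)
  have i2: "Sum_any (\<lambda>y. Sum_any (\<lambda>(z, t). g x y z t)) = Sum_any (\<lambda>(y, zt). (case zt of (z, t) \<Rightarrow> g x y z t))" for x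
  proof (rule SA_cart[of "{-B..B}" "{-B..B} \<times> {-B..B}"])
    fix y zt assume "(case zt of (z, t) \<Rightarrow> g x y z t) \<noteq> 0"
    then show "y \<in> {-B..B} \<and> zt \<in> {-B..B} \<times> {-B..B}" using bd by (cases zt) auto
  qed auto
  have i3: "Sum_any (\<lambda>x. Sum_any (\<lambda>(y, zt). (case zt of (z, t) \<Rightarrow> g x y z t))) =
      Sum_any (\<lambda>(x, yzt). (case yzt of (y, zt) \<Rightarrow> (case zt of (z, t) \<Rightarrow> g x y z t)))"
  proof (rule SA_cart[of "{-B..B}" "{-B..B} \<times> {-B..B} \<times> {-B..B}"])
    fix x yzt assume "(case yzt of (y, zt) \<Rightarrow> (case zt of (z, t) \<Rightarrow> g x y z t)) \<noteq> 0"
    then show "x \<in> {-B..B} \<and> yzt \<in> {-B..B} \<times> {-B..B} \<times> {-B..B}" using bd by (cases yzt) auto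
  qed auto
  show ?thesis unfolding i1 i2 i3 by (simp add: case_prod_beta)
qed

context qa
begin

definition TI :: "int \<Rightarrow> int \<Rightarrow> int \<Rightarrow> int \<Rightarrow> int \<Rightarrow> int \<Rightarrow> int \<Rightarrow> 'a" where
  "TI k1 k2 k3 R1 R2 x y = E ((R1 - R2 - k1 + y) * y) * Q (R1 - R2 - k1 + y) * Q (R2 - k2 - x - y) *
     Ra (R1 - R2 - k3 + x) * Q x * Q (2 * R2 - R1 - x - y) * Q y"

lemma TI_supp: "TI k1 k2 k3 R1 R2 x y \<noteq> 0 \<Longrightarrow>
    0 \<le> R1 - R2 - k1 + y \<and> 0 \<le> R2 - k2 - x - y \<and> 0 \<le> x \<and> 0 \<le> 2 * R2 - R1 - x - y \<and> 0 \<le> y"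
  by (auto simp: TI_def Q_neg not_less[symmetric])

lemma KI_eq:
  assumes ks: "k1 + k2 + k3 = 0"
  shows "kernel_I a q R1 R2 (k1, k2, k3) = Sum_any (\<lambda>x. Sum_any (\<lambda>y. TI k1 k2 k3 (int R1) (int R2) x y))"
proof -
  define g where "g = (\<lambda>(r1, r2, r3, r12, r13, r23).
       if r1 + r12 + r13 = int R2 - k1 \<and> r2 + r12 + r23 = int R2 - k2 \<and>
          r3 + r13 + r23 = int R2 - k3 \<and> r1 + r2 + r3 = 2 * int R1 - int R2 \<and>
          r12 + r13 + r23 = 2 * int R2 - int R1
       then q powi (r1 * r23) /
          (qpoch q q r1 * qpoch q q r2 * qpoch (a * q) q r3 *
           qpoch q q r12 * qpoch q q r13 * qpoch q q r23)
       else (0::'a))"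
  define \<phi> where "\<phi> = (\<lambda>(x::int, y::int). (int R1 - int R2 - k1 + y, int R2 - k2 - x - y, int R1 - int R2 - k3 + x, x,
      2 * int R2 - int R1 - x - y, y))"
  have k: "kernel_I a q R1 R2 (k1, k2, k3) = Sum_any g" by (simp add: kernel_I_def g_def)
  have inj: "inj \<phi>" by (auto simp: \<phi>_def intro!: injI)
  have rng: "z \<in> range \<phi>" if "g z \<noteq> 0" for z
  proof -
    obtain r1 r2 r3 r12 r13 r23 where z: "z = (r1, r2, r3, r12, r13, r23)" by (cases z) auto
    from that have c: "r1 + r12 + r13 = int R2 - k1" "r2 + r12 + r23 = int R2 - k2"
      "r1 + r2 + r3 = 2 * int R1 - int R2" "r12 + r13 + r23 = 2 * int R2 - int R1"
      by (auto simp: g_def z split: if_splits)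
    have "z = \<phi> (r12, r23)" using c ks unfolding z \<phi>_def by (simp; linarith)
    then show ?thesis by blast
  qed
  have "Sum_any g = Sum_any (g \<circ> \<phi>)" by (rule SA_reindex_inj[OF inj rng])
  also have "g \<circ> \<phi> = (\<lambda>(x, y). TI k1 k2 k3 (int R1) (int R2) x y)"
  proof
    fix p :: "int \<times> int"
    obtain x y where p: "p = (x, y)" by (cases p)
    have c: "int R1 - int R2 - k3 + x + (2 * int R2 - int R1 - x - y) + y = int R2 - k3" by simp
    have c2: "int R1 - int R2 - k1 + y + (int R2 - k2 - x - y) + (int R1 - int R2 - k3 + x) = 2 * int R1 - int R2"
      using ks by simp
    show "(g \<circ> \<phi>) p = (\<lambda>(x, y). TI k1 k2 k3 (int R1) (int R2) x y) p"
      unfolding p using c c2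
      by (simp add: g_def \<phi>_def TI_def E_def divide_inverse inverse_mult_distrib Q_inv Ra_inv mult_ac)
  qed
  also have "Sum_any (\<lambda>(x, y). TI k1 k2 k3 (int R1) (int R2) x y) = Sum_any (\<lambda>x. Sum_any (\<lambda>y. TI k1 k2 k3 (int R1) (int R2) x y))"
  proof (rule SA_cart[of "{0..2 * int R2}" "{0..2 * int R2}", symmetric])
    fix x y assume "TI k1 k2 k3 (int R1) (int R2) x y \<noteq> 0"
    from TI_supp[OF this] show "x \<in> {0..2 * int R2} \<and> y \<in> {0..2 * int R2}" by auto
  qed auto
  finally show ?thesis using k by simp
qed

lemma PV_int:
  "Sum_any (\<lambda>s. a ^ nat s * E (m * s + s * s) * Ra (m + s) * Q s * Q (A - s) * Q (B - s))
     = Ra (m + B) * pp (a * E (m + A + 1)) B * Q A * Q B"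
proof (cases "A \<ge> 0 \<and> B \<ge> 0")
  case True
  obtain A' where A: "A = int A'" using True by (metis nonneg_eq_int)
  obtain B' where B: "B = int B'" using True by (metis nonneg_eq_int)
  show ?thesis unfolding A B by (rule PVpsi)
next
  case False
  have "Sum_any (\<lambda>s. a ^ nat s * E (m * s + s * s) * Ra (m + s) * Q s * Q (A - s) * Q (B - s)) = 0"
  proof (rule SA_zero)
    fix s show "a ^ nat s * E (m * s + s * s) * Ra (m + s) * Q s * Q (A - s) * Q (B - s) = 0"
      using False by (cases "s < 0") (auto simp: Q_neg)
  qed
  moreover have "Q A * Q B = 0" using False by (auto simp: Q_neg)
  ultimately show ?thesis by (simp add: mult.assoc)
qed

lemma typeI_k:
  assumes k: "k2 \<le> k1" "k3 \<le> k2" "k1 + k2 + k3 = 0"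
  shows "bailey_f TypeI a q L1 L2 * (\<Sum>r1\<le>L1. \<Sum>r2\<le>L2. a ^ r1 * q powi (int r1 ^ 2 - int r1 * int r2 + int r2 ^ 2) /
            (qpoch q q (int L1 - int r1) * qpoch q q (int L2 - int r2)) * kernel_I a q r1 r2 (k1, k2, k3))
     = a powi (k1 + k2) * q powi ((k1^2 + k2^2 + k3^2) div 2) * kernel_II a q L1 L2 (k1, k2, k3)"
proof -
  define M where "M = int L1 + k3"
  define N where "N = int L2 - k1"
  define u where "u = k1 - k2"
  define v where "v = k2 - k3"
  define w where "w = k1 - k3"
  have k1p: "k1 \<ge> 0" and k3n: "k3 \<le> 0" using k by linarith+
  have u0: "u \<ge> 0" and v0: "v \<ge> 0" and w0: "w \<ge> 0" and wuv: "w = u + v"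
    using k by (simp_all add: u_def v_def w_def)
  have k2e: "k2 = - k1 - k3" using k by simp
  define K0 where "K0 = a ^ nat (- k3) * E (k1 * k1 + k1 * k3 + k3 * k3)"
  define Bd where "Bd = int L1 + int L2 + \<bar>k1\<bar> + \<bar>k2\<bar> + \<bar>k3\<bar>"
  define G where "G R1 R2 x y = a ^ nat R1 * E (R1 * R1 - R1 * R2 + R2 * R2) * Q (int L1 - R1) * Q (int L2 - R2) *
      TI k1 k2 k3 R1 R2 x y" for R1 R2 x y
  have G_supp: "G R1 R2 x y \<noteq> 0 \<Longrightarrow> 0 \<le> R1 \<and> R1 \<le> int L1 \<and> 0 \<le> R2 \<and> R2 \<le> int L2 \<and>
      R1 \<in> {-Bd..Bd} \<and> R2 \<in> {-Bd..Bd} \<and> x \<in> {-Bd..Bd} \<and> y \<in> {-Bd..Bd}" for R1 R2 x y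
  proof -
    assume nz: "G R1 R2 x y \<noteq> 0"
    then have "Q (int L1 - R1) \<noteq> 0" "Q (int L2 - R2) \<noteq> 0" "TI k1 k2 k3 R1 R2 x y \<noteq> 0"
      by (auto simp: G_def)
    then have "R1 \<le> int L1" "R2 \<le> int L2" and t: "0 \<le> R1 - R2 - k1 + y" "0 \<le> R2 - k2 - x - y" "0 \<le> x"
      "0 \<le> 2 * R2 - R1 - x - y" "0 \<le> y"
      using TI_supp by (auto simp: Q_neg not_less[symmetric])
    then show ?thesis using k1p k3n k unfolding Bd_def by auto
  qed
  have S0: "a ^ r1 * q powi (int r1 ^ 2 - int r1 * int r2 + int r2 ^ 2) /
            (qpoch q q (int L1 - int r1) * qpoch q q (int L2 - int r2)) * kernel_I a q r1 r2 (k1, k2, k3)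
        = Sum_any (\<lambda>x. Sum_any (\<lambda>y. G (int r1) (int r2) x y))" for r1 r2
  proof -
    have c: "a ^ r1 * q powi (int r1 ^ 2 - int r1 * int r2 + int r2 ^ 2) /
            (qpoch q q (int L1 - int r1) * qpoch q q (int L2 - int r2)) =
        a ^ nat (int r1) * E (int r1 * int r1 - int r1 * int r2 + int r2 * int r2) * Q (int L1 - int r1) * Q (int L2 - int r2)"
      by (simp add: E_def divide_inverse inverse_mult_distrib Q_inv power2_eq_square)
    show ?thesis unfolding c KI_eq[OF k(3)] G_def by (simp only: SA_cmult mult.assoc)
  qed
  have S1: "(\<Sum>r1\<le>L1. \<Sum>r2\<le>L2. Sum_any (\<lambda>x. Sum_any (\<lambda>y. G (int r1) (int r2) x y))) =
      Sum_any (\<lambda>R1. Sum_any (\<lambda>R2. Sum_any (\<lambda>x. Sum_any (\<lambda>y. G R1 R2 x y))))"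
  proof -
    have "(\<Sum>r2\<le>L2. Sum_any (\<lambda>x. Sum_any (\<lambda>y. G (int r1) (int r2) x y))) =
        Sum_any (\<lambda>R2. Sum_any (\<lambda>x. Sum_any (\<lambda>y. G (int r1) R2 x y)))" for r1
    proof (rule SA_nat_sum)
      fix R2 assume "Sum_any (\<lambda>x. Sum_any (\<lambda>y. G (int r1) R2 x y)) \<noteq> 0"
      then obtain x where "Sum_any (\<lambda>y. G (int r1) R2 x y) \<noteq> 0" by (rule Sum_any.not_neutral_obtains_not_neutral)
      then obtain y where "G (int r1) R2 x y \<noteq> 0" by (rule Sum_any.not_neutral_obtains_not_neutral)
      then show "0 \<le> R2 \<and> R2 \<le> int L2" using G_supp by blast
    qed
    then have "(\<Sum>r1\<le>L1. \<Sum>r2\<le>L2. Sum_any (\<lambda>x. Sum_any (\<lambda>y. G (int r1) (int r2) x y))) =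
        (\<Sum>r1\<le>L1. Sum_any (\<lambda>R2. Sum_any (\<lambda>x. Sum_any (\<lambda>y. G (int r1) R2 x y))))" by simp
    also have "\<dots> = Sum_any (\<lambda>R1. Sum_any (\<lambda>R2. Sum_any (\<lambda>x. Sum_any (\<lambda>y. G R1 R2 x y))))"
    proof (rule SA_nat_sum)
      fix R1 assume "Sum_any (\<lambda>R2. Sum_any (\<lambda>x. Sum_any (\<lambda>y. G R1 R2 x y))) \<noteq> 0"
      then obtain R2 where "Sum_any (\<lambda>x. Sum_any (\<lambda>y. G R1 R2 x y)) \<noteq> 0" by (rule Sum_any.not_neutral_obtains_not_neutral)
      then obtain x where "Sum_any (\<lambda>y. G R1 R2 x y) \<noteq> 0" by (rule Sum_any.not_neutral_obtains_not_neutral)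
      then obtain y where "G R1 R2 x y \<noteq> 0" by (rule Sum_any.not_neutral_obtains_not_neutral)
      then show "0 \<le> R1 \<and> R1 \<le> int L1" using G_supp by blast
    qed
    finally show ?thesis .
  qed
  define \<phi> where "\<phi> = (\<lambda>(i::int, j::int, \<alpha>::int, s::int). (i + s - k3, j + k1, i - \<alpha>, j + u - i + \<alpha> - s))"
  define \<psi> where "\<psi> = (\<lambda>(R1::int, R2::int, x::int, y::int). (R1 - R2 - k1 + x + y, R2 - k1, R1 - R2 - k1 + y, R2 - k2 - x - y))"
  have bij: "bij \<phi>"
  proof (rule o_bij[of \<psi>])
    show "\<psi> \<circ> \<phi> = id" using k by (auto simp: \<phi>_def \<psi>_def u_def fun_eq_iff)
    show "\<phi> \<circ> \<psi> = id" using k by (auto simp: \<phi>_def \<psi>_def u_def fun_eq_iff)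
  qed
  define H where "H i j \<alpha> s = a ^ nat (i + s) * E ((i + s) * (i + s) - (i + s) * j + j * j + (i + s) * v + j * u + \<alpha> * (j + u - i + \<alpha> - s)) *
      Q (M - i - s) * Q (N - j) * Q \<alpha> * Q s * Ra (2 * i + s - j - \<alpha> + v) * Q (i - \<alpha>) * Q (j - i) * Q (j + u - i + \<alpha> - s)"
    for i j \<alpha> s
  have GH: "G (i + s - k3) (j + k1) (i - \<alpha>) (j + u - i + \<alpha> - s) = K0 * H i j \<alpha> s" for i j \<alpha> s
  proof -
  have i1: "i + s - k3 - (j + k1) - k1 + (j + u - i + \<alpha> - s) = \<alpha>"
    "j + k1 - k2 - (i - \<alpha>) - (j + u - i + \<alpha> - s) = s"
    "i + s - k3 - (j + k1) - k3 + (i - \<alpha>) = 2 * i + s - j - \<alpha> + v"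
    "2 * (j + k1) - (i + s - k3) - (i - \<alpha>) - (j + u - i + \<alpha> - s) = j - i"
    "int L1 - (i + s - k3) = M - i - s" "int L2 - (j + k1) = N - j"
    using k by (simp_all add: u_def v_def M_def N_def algebra_simps)
  show ?thesis
  proof (cases "i + s \<ge> 0")
    case True
    have ap: "a ^ nat (i + s - k3) = a ^ nat (i + s) * a ^ nat (- k3)" using True k3n
      by (simp add: nat_add_distrib[symmetric] power_add[symmetric])
    have e: "E ((i + s - k3) * (i + s - k3) - (i + s - k3) * (j + k1) + (j + k1) * (j + k1)) *
        E ((i + s - k3 - (j + k1) - k1 + (j + u - i + \<alpha> - s)) * (j + u - i + \<alpha> - s)) =
        E (k1 * k1 + k1 * k3 + k3 * k3) * E ((i + s) * (i + s) - (i + s) * j + j * j + (i + s) * v + j * u + \<alpha> * (j + u - i + \<alpha> - s))"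
      by (simp add: E_add[symmetric] u_def v_def k2e algebra_simps)
    have "G (i + s - k3) (j + k1) (i - \<alpha>) (j + u - i + \<alpha> - s) =
        a ^ nat (i + s - k3) * (E ((i + s - k3) * (i + s - k3) - (i + s - k3) * (j + k1) + (j + k1) * (j + k1)) *
        E ((i + s - k3 - (j + k1) - k1 + (j + u - i + \<alpha> - s)) * (j + u - i + \<alpha> - s))) *
        Q (int L1 - (i + s - k3)) * Q (int L2 - (j + k1)) *
        Q (i + s - k3 - (j + k1) - k1 + (j + u - i + \<alpha> - s)) * Q (j + k1 - k2 - (i - \<alpha>) - (j + u - i + \<alpha> - s)) *
        Ra (i + s - k3 - (j + k1) - k3 + (i - \<alpha>)) * Q (i - \<alpha>) * Q (2 * (j + k1) - (i + s - k3) - (i - \<alpha>) - (j + u - i + \<alpha> - s)) *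
        Q (j + u - i + \<alpha> - s)"
      unfolding G_def TI_def by (simp only: mult_ac)
    also have "\<dots> = K0 * H i j \<alpha> s"
      unfolding e unfolding ap i1 H_def K0_def by (simp only: mult_ac)
    finally show ?thesis .
  next
    case False
    then have "s < 0 \<or> \<alpha> < 0 \<or> i - \<alpha> < 0" by linarith
    then show ?thesis unfolding G_def TI_def H_def i1 by (auto simp: Q_neg)
  qed
  qed
  have H_supp: "H i j \<alpha> s \<noteq> 0 \<Longrightarrow> 0 \<le> \<alpha> \<and> \<alpha> \<le> i \<and> 0 \<le> s \<and> i + s \<le> M \<and> i \<le> j \<and> j \<le> N" for i j \<alpha> s
  proof -
    assume "H i j \<alpha> s \<noteq> 0"
    then have "Q (M - i - s) \<noteq> 0" "Q (N - j) \<noteq> 0" "Q \<alpha> \<noteq> 0" "Q s \<noteq> 0" "Q (i - \<alpha>) \<noteq> 0" "Q (j - i) \<noteq> 0"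
      by (auto simp: H_def)
    then show ?thesis by (auto simp: Q_neg not_less[symmetric])
  qed
  have MN: "M \<le> int L1" "N \<le> int L2" using k1p k3n by (simp_all add: M_def N_def)
  have S2: "Sum_any (\<lambda>R1. Sum_any (\<lambda>R2. Sum_any (\<lambda>x. Sum_any (\<lambda>y. G R1 R2 x y)))) =
      Sum_any (\<lambda>(R1, R2, x, y). G R1 R2 x y)"
    by (rule SA4[of _ Bd]) (use G_supp in blast)
  have S3: "Sum_any (\<lambda>(R1, R2, x, y). G R1 R2 x y) = Sum_any (\<lambda>(i, j, \<alpha>, s). K0 * H i j \<alpha> s)"
  proof (rule Sum_any.reindex_cong[OF bij])
    show "(\<lambda>(R1, R2, x, y). G R1 R2 x y) \<circ> \<phi> = (\<lambda>(i, j, \<alpha>, s). K0 * H i j \<alpha> s)"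
      by (auto simp: \<phi>_def GH fun_eq_iff)
  qed
  have S4: "Sum_any (\<lambda>(i, j, \<alpha>, s). K0 * H i j \<alpha> s) =
      K0 * Sum_any (\<lambda>i. Sum_any (\<lambda>j. Sum_any (\<lambda>\<alpha>. Sum_any (\<lambda>s. H i j \<alpha> s))))"
  proof -
    have "Sum_any (\<lambda>(i, j, \<alpha>, s). K0 * H i j \<alpha> s) =
        Sum_any (\<lambda>i. Sum_any (\<lambda>j. Sum_any (\<lambda>\<alpha>. Sum_any (\<lambda>s. K0 * H i j \<alpha> s))))"
    proof (rule SA4[of _ Bd, symmetric])
      fix i j \<alpha> s assume "K0 * H i j \<alpha> s \<noteq> 0"
      then have "H i j \<alpha> s \<noteq> 0" by auto
      from H_supp[OF this] MN show "i \<in> {-Bd..Bd} \<and> j \<in> {-Bd..Bd} \<and> \<alpha> \<in> {-Bd..Bd} \<and> s \<in> {-Bd..Bd}"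
        unfolding Bd_def by auto
    qed
    then show ?thesis by (simp only: SA_cmult)
  qed
  define P1 where "P1 i j \<alpha> = a ^ nat i * E (i * i - i * j + j * j + i * v + j * u + \<alpha> * (j + u - i + \<alpha>)) *
      Q (N - j) * Q \<alpha> * Q (i - \<alpha>) * Q (j - i)" for i j \<alpha>
  have s_step: "Sum_any (H i j \<alpha>) = P1 i j \<alpha> * (Ra (i + w) * pp (a * E (M + i - j - \<alpha> + v + 1)) (j + u - i + \<alpha>) *
      Q (M - i) * Q (j + u - i + \<alpha>))" for i j \<alpha>
  proof -
    have pw: "H i j \<alpha> s = P1 i j \<alpha> * (a ^ nat s * E ((2 * i - j - \<alpha> + v) * s + s * s) * Ra ((2 * i - j - \<alpha> + v) + s) *
        Q s * Q ((M - i) - s) * Q ((j + u - i + \<alpha>) - s))" for s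
    proof (cases "i \<ge> 0 \<and> s \<ge> 0")
      case True
      have ap: "a ^ nat (i + s) = a ^ nat i * a ^ nat s" using True by (simp add: nat_add_distrib power_add)
      have e: "E ((i + s) * (i + s) - (i + s) * j + j * j + (i + s) * v + j * u + \<alpha> * (j + u - i + \<alpha> - s)) =
          E (i * i - i * j + j * j + i * v + j * u + \<alpha> * (j + u - i + \<alpha>)) * E ((2 * i - j - \<alpha> + v) * s + s * s)"
        by (simp add: E_add[symmetric] algebra_simps)
      have i2: "2 * i + s - j - \<alpha> + v = (2 * i - j - \<alpha> + v) + s" by simp
      show ?thesis unfolding H_def P1_def ap e i2 by (simp only: mult_ac)
    next
      case False
      then have "s < 0 \<or> \<alpha> < 0 \<or> i - \<alpha> < 0" by linarith
      then show ?thesis by (auto simp: H_def P1_def Q_neg)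
    qed
    have pwf: "H i j \<alpha> = (\<lambda>s. P1 i j \<alpha> * (a ^ nat s * E ((2 * i - j - \<alpha> + v) * s + s * s) * Ra ((2 * i - j - \<alpha> + v) + s) *
        Q s * Q ((M - i) - s) * Q ((j + u - i + \<alpha>) - s)))"
      by (rule ext) (rule pw)
    have "Sum_any (H i j \<alpha>) = P1 i j \<alpha> * Sum_any (\<lambda>s. a ^ nat s * E ((2 * i - j - \<alpha> + v) * s + s * s) * Ra ((2 * i - j - \<alpha> + v) + s) *
        Q s * Q ((M - i) - s) * Q ((j + u - i + \<alpha>) - s))"
      unfolding pwf by (rule SA_cmult)
    also have "\<dots> = P1 i j \<alpha> * (Ra ((2 * i - j - \<alpha> + v) + (j + u - i + \<alpha>)) * pp (a * E ((2 * i - j - \<alpha> + v) + (M - i) + 1)) (j + u - i + \<alpha>) *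
        Q (M - i) * Q (j + u - i + \<alpha>))"
      by (simp only: PV_int)
    also have "(2 * i - j - \<alpha> + v) + (j + u - i + \<alpha>) = i + w" by (simp add: wuv)
    also have "(2 * i - j - \<alpha> + v) + (M - i) + 1 = M + i - j - \<alpha> + v + 1" by simp
    finally show ?thesis .
  qed
  define P2 where "P2 i j = a ^ nat i * E (i * i - i * j + j * j + i * v + j * u) * Q (N - j) * Q (j - i) * Ra (i + w) * Q (M - i)" for i j
  have a_step: "Sum_any (\<lambda>\<alpha>. P1 i j \<alpha> * (Ra (i + w) * pp (a * E (M + i - j - \<alpha> + v + 1)) (j + u - i + \<alpha>) *
      Q (M - i) * Q (j + u - i + \<alpha>))) = P2 i j * (pp (a * E (M + i - j + v + 1)) (j + u) * Q i * Q (j + u))" for i j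
  proof -
    have pw: "P1 i j \<alpha> * (Ra (i + w) * pp (a * E (M + i - j - \<alpha> + v + 1)) (j + u - i + \<alpha>) * Q (M - i) * Q (j + u - i + \<alpha>))
        = P2 i j * (E (\<alpha> * (\<alpha> + (j + u - i))) * Q \<alpha> * Q (\<alpha> + (j + u - i)) * Q (i - \<alpha>) *
           pp (a * E ((M + i - j + v) - \<alpha> + 1)) (\<alpha> + (j + u - i)))" for \<alpha>
    proof -
      have e: "E (i * i - i * j + j * j + i * v + j * u + \<alpha> * (j + u - i + \<alpha>)) =
          E (i * i - i * j + j * j + i * v + j * u) * E (\<alpha> * (\<alpha> + (j + u - i)))"
        by (simp add: E_add[symmetric] algebra_simps)
      have i2: "M + i - j - \<alpha> + v + 1 = (M + i - j + v) - \<alpha> + 1" "j + u - i + \<alpha> = \<alpha> + (j + u - i)" by simp_all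
      show ?thesis unfolding P1_def P2_def unfolding e unfolding i2 by (simp only: mult_ac)
    qed
    have "Sum_any (\<lambda>\<alpha>. P1 i j \<alpha> * (Ra (i + w) * pp (a * E (M + i - j - \<alpha> + v + 1)) (j + u - i + \<alpha>) *
      Q (M - i) * Q (j + u - i + \<alpha>))) = P2 i j * Sum_any (\<lambda>\<alpha>. E (\<alpha> * (\<alpha> + (j + u - i))) * Q \<alpha> * Q (\<alpha> + (j + u - i)) * Q (i - \<alpha>) *
           pp (a * E ((M + i - j + v) - \<alpha> + 1)) (\<alpha> + (j + u - i)))"
      by (simp only: pw SA_cmult)
    also have "\<dots> = P2 i j * (pp (a * E ((M + i - j + v) + 1)) (i + (j + u - i)) * Q i * Q (i + (j + u - i)))"
      by (simp only: VA)
    also have "i + (j + u - i) = j + u" by simp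
    finally show ?thesis by simp
  qed
  define P3 where "P3 i = a ^ nat i * E (i * i + i * v + i * u) * Ra (i + w) * Q (M - i) * Q i" for i
  have j_step: "Sum_any (\<lambda>j. P2 i j * (pp (a * E (M + i - j + v + 1)) (j + u) * Q i * Q (j + u))) =
      P3 i * (pp (a * E (M + v + 1)) (N + u) * Q (N - i) * Q (N + u))" for i
  proof -
    have pw: "P2 i (p + i) * (pp (a * E (M + i - (p + i) + v + 1)) (p + i + u) * Q i * Q (p + i + u)) =
        P3 i * (E (p * (p + (i + u))) * Q p * Q (p + (i + u)) * Q ((N - i) - p) * pp (a * E ((M + v) - p + 1)) (p + (i + u)))" for p
    proof -
      have e: "E (i * i - i * (p + i) + (p + i) * (p + i) + i * v + (p + i) * u) = E (i * i + i * v + i * u) * E (p * (p + (i + u)))"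
        by (simp add: E_add[symmetric] algebra_simps)
      have i2: "M + i - (p + i) + v + 1 = (M + v) - p + 1" "p + i + u = p + (i + u)" "N - (p + i) = (N - i) - p" "p + i - i = p"
        by simp_all
      show ?thesis unfolding P2_def P3_def e i2 by (simp only: mult_ac)
    qed
    have "Sum_any (\<lambda>j. P2 i j * (pp (a * E (M + i - j + v + 1)) (j + u) * Q i * Q (j + u))) =
        Sum_any (\<lambda>p. P2 i (p + i) * (pp (a * E (M + i - (p + i) + v + 1)) (p + i + u) * Q i * Q (p + i + u)))"
      by (rule SA_shift[symmetric])
    also have "\<dots> = P3 i * Sum_any (\<lambda>p. E (p * (p + (i + u))) * Q p * Q (p + (i + u)) * Q ((N - i) - p) * pp (a * E ((M + v) - p + 1)) (p + (i + u)))"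
      by (simp only: pw SA_cmult)
    also have "\<dots> = P3 i * (pp (a * E ((M + v) + 1)) ((N - i) + (i + u)) * Q (N - i) * Q ((N - i) + (i + u)))"
      by (simp only: VA)
    also have "(N - i) + (i + u) = N + u" by simp
    finally show ?thesis by simp
  qed
  have i_step: "Sum_any (\<lambda>i. P3 i * (pp (a * E (M + v + 1)) (N + u) * Q (N - i) * Q (N + u))) =
      pp (a * E (M + v + 1)) (N + u) * Q (N + u) * Sum_any (\<lambda>i. a ^ nat i * E (w * i + i * i) * Ra (w + i) * Q i * Q (M - i) * Q (N - i))"
  proof -
    have pw: "P3 i * (pp (a * E (M + v + 1)) (N + u) * Q (N - i) * Q (N + u)) =
        pp (a * E (M + v + 1)) (N + u) * Q (N + u) * (a ^ nat i * E (w * i + i * i) * Ra (w + i) * Q i * Q (M - i) * Q (N - i))" for i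
    proof -
      have e: "E (i * i + i * v + i * u) = E (w * i + i * i)" by (simp add: wuv algebra_simps)
      show ?thesis unfolding P3_def e by (simp only: mult_ac add.commute[of i w])
    qed
    show ?thesis by (simp only: pw SA_cmult)
  qed
  have lhs: "(\<Sum>r1\<le>L1. \<Sum>r2\<le>L2. a ^ r1 * q powi (int r1 ^ 2 - int r1 * int r2 + int r2 ^ 2) /
            (qpoch q q (int L1 - int r1) * qpoch q q (int L2 - int r2)) * kernel_I a q r1 r2 (k1, k2, k3))
      = K0 * (pp (a * E (M + v + 1)) (N + u) * Q (N + u) * Sum_any (\<lambda>i. a ^ nat i * E (w * i + i * i) * Ra (w + i) * Q i * Q (M - i) * Q (N - i)))"
    by (simp only: S0 S1 S2 S3 S4 s_step a_step j_step i_step)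
  have bf: "bailey_f TypeI a q L1 L2 = Ra (M + N + w)"
    by (simp add: bailey_f_def Ra_def M_def N_def w_def)
  have rhs: "a powi (k1 + k2) * q powi ((k1^2 + k2^2 + k3^2) div 2) * kernel_II a q L1 L2 (k1, k2, k3)
      = K0 * (Pa (M + N + w) * Ra (M + w) * Ra (M + v) * Q M * Q N * Q (N + u) * Ra (N + w))"
  proof -
    have ap: "a powi (k1 + k2) = a ^ nat (- k3)" using k3n k2e by (simp add: power_int_def)
    have dv: "(k1^2 + k2^2 + k3^2) div 2 = k1 * k1 + k1 * k3 + k3 * k3"
    proof -
      have "k1^2 + k2^2 + k3^2 = 2 * (k1 * k1 + k1 * k3 + k3 * k3)" by (simp add: k2e power2_eq_square algebra_simps)
      then show ?thesis by simp
    qed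
    have i1: "int L1 + int L2 = M + N + w" "int L1 + k1 = M + w" "int L1 + k2 = M + v" "int L1 + k3 = M"
      "int L2 - k1 = N" "int L2 - k2 = N + u" "int L2 - k3 = N + w"
      by (simp_all add: M_def N_def u_def v_def w_def)
    show ?thesis unfolding KII_eq ap dv i1 K0_def E_def[symmetric] by (simp only: mult_ac)
  qed
  show ?thesis
  proof (cases "M \<ge> 0 \<and> N \<ge> 0")
    case True
    have pp1: "pp (a * E (w + M + 1)) N = Pa (M + N + w) * Ra (M + w)"
    proof -
      have "Ra (w + M) = pp (a * E (w + M + 1)) N * Ra (w + M + N)" using True by (intro Ra_pp) simp
      moreover have "Pa (M + N + w) * Ra (w + M + N) = 1" using True w0 Pa_Ra[of "M + N + w"] by (simp add: add_ac)
      ultimately show ?thesis by (simp add: add.commute mult.left_commute)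
    qed
    have pp2: "pp (a * E (M + v + 1)) (N + u) = Pa (M + N + w) * Ra (M + v)"
    proof -
      have "Ra (M + v) = pp (a * E (M + v + 1)) (N + u) * Ra (M + v + (N + u))" using True u0 by (intro Ra_pp) simp
      moreover have "M + v + (N + u) = M + N + w" by (simp add: wuv)
      moreover have "Pa (M + N + w) * Ra (M + N + w) = 1" using True w0 Pa_Ra[of "M + N + w"] by simp
      ultimately show ?thesis by (metis mult.commute mult.left_commute mult_1_right)
    qed
    have pr: "Ra (M + N + w) * Pa (M + N + w) = 1" using True w0 Pa_Ra[of "M + N + w"] by (simp add: mult.commute)
    have "bailey_f TypeI a q L1 L2 * (K0 * (pp (a * E (M + v + 1)) (N + u) * Q (N + u) *
        (Ra (w + N) * pp (a * E (w + M + 1)) N * Q M * Q N))) =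
        (Ra (M + N + w) * Pa (M + N + w)) * (K0 * (Pa (M + N + w) * Ra (M + w) * Ra (M + v) * Q M * Q N * Q (N + u) * Ra (N + w)))"
      unfolding bf pp1 pp2 by (simp only: mult_ac add.commute[of w N])
    then show ?thesis unfolding lhs rhs lsumII[OF conjunct1[OF True] conjunct2[OF True]] pr by simp
  next
    case False
    have z: "Sum_any (\<lambda>i. a ^ nat i * E (w * i + i * i) * Ra (w + i) * Q i * Q (M - i) * Q (N - i)) = 0"
    proof (rule SA_zero)
      fix i show "a ^ nat i * E (w * i + i * i) * Ra (w + i) * Q i * Q (M - i) * Q (N - i) = 0"
        using False by (cases "i < 0") (auto simp: Q_neg)
    qed
    have "Q M * Q N = 0" using False by (auto simp: Q_neg)
    then show ?thesis unfolding lhs rhs z by (auto simp: mult_ac)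
  qed
qed

end

lemma SA_sum_swap:
  fixes g :: "'r \<Rightarrow> 'k \<Rightarrow> 'a::comm_monoid_add"
  assumes "finite A" "\<And>r. r \<in> A \<Longrightarrow> finite {k. g r k \<noteq> 0}"
  shows "(\<Sum>r\<in>A. Sum_any (g r)) = Sum_any (\<lambda>k. \<Sum>r\<in>A. g r k)"
  using assms
proof (induction A rule: finite_induct)
  case empty then show ?case by simp
next
  case (insert x F)
  have fx: "finite {k. g x k \<noteq> 0}" using insert.prems by simp
  have fF: "finite {k. (\<Sum>r\<in>F. g r k) \<noteq> 0}"
  proof (rule finite_subset[of _ "\<Union>r\<in>F. {k. g r k \<noteq> 0}"])
    show "{k. (\<Sum>r\<in>F. g r k) \<noteq> 0} \<subseteq> (\<Union>r\<in>F. {k. g r k \<noteq> 0})"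
      by (auto elim: sum.not_neutral_contains_not_neutral)
    show "finite (\<Union>r\<in>F. {k. g r k \<noteq> 0})" using insert by auto
  qed
  have "(\<Sum>r\<in>insert x F. Sum_any (g r)) = Sum_any (g x) + (\<Sum>r\<in>F. Sum_any (g r))"
    using insert by simp
  also have "(\<Sum>r\<in>F. Sum_any (g r)) = Sum_any (\<lambda>k. \<Sum>r\<in>F. g r k)" using insert by simp
  also have "Sum_any (g x) + Sum_any (\<lambda>k. \<Sum>r\<in>F. g r k) = Sum_any (\<lambda>k. g x k + (\<Sum>r\<in>F. g r k))"
    by (rule Sum_any.distrib[symmetric, OF fx fF])
  finally show ?case using insert by simp
qed

context qa
begin

lemma kernel_supp:
  assumes adm: "A2_index k" and nz: "bailey_kernel T a q r1 r2 k \<noteq> 0"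
  shows "k \<in> {- int r1..int r2} \<times> {- int r1..int r2} \<times> {- int r1..int r2}"
proof -
  obtain k1 k2 k3 where kk: "k = (k1, k2, k3)" by (cases k) auto
  have c: "k2 \<le> k1" "k3 \<le> k2" "k1 + k2 + k3 = 0" using adm by (auto simp: A2_index_def kk)
  have b: "int r1 + k3 \<ge> 0 \<and> int r2 - k1 \<ge> 0"
  proof (cases T)
    case TypeII
    then have "kernel_II a q r1 r2 (k1, k2, k3) \<noteq> 0" using nz by (simp add: bailey_kernel_def kk)
    then have "Q (int r1 + k3) \<noteq> 0" "Q (int r2 - k1) \<noteq> 0" by (auto simp: KII_eq)
    then show ?thesis by (auto simp: Q_neg not_less[symmetric])
  next
    case TypeI
    then have "kernel_I a q r1 r2 (k1, k2, k3) \<noteq> 0" using nz by (simp add: bailey_kernel_def kk)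
    then have "Sum_any (\<lambda>x. Sum_any (\<lambda>y. TI k1 k2 k3 (int r1) (int r2) x y)) \<noteq> 0" using KI_eq[OF c(3)] by simp
    then obtain x where "Sum_any (\<lambda>y. TI k1 k2 k3 (int r1) (int r2) x y) \<noteq> 0"
      by (rule Sum_any.not_neutral_obtains_not_neutral)
    then obtain y where "TI k1 k2 k3 (int r1) (int r2) x y \<noteq> 0"
      by (rule Sum_any.not_neutral_obtains_not_neutral)
    from TI_supp[OF this] show ?thesis using c(3) by linarith
  qed
  show ?thesis using b c by (auto simp: kk)
qed

lemma kernel_fin: "finite {k. (if A2_index k then \<alpha> k * bailey_kernel T a q r1 r2 k else 0) \<noteq> 0}"
proof (rule finite_subset[of _ "{- int r1..int r2} \<times> {- int r1..int r2} \<times> {- int r1..int r2}"])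
  show "{k. (if A2_index k then \<alpha> k * bailey_kernel T a q r1 r2 k else 0) \<noteq> 0}
      \<subseteq> {- int r1..int r2} \<times> {- int r1..int r2} \<times> {- int r1..int r2}"
    using kernel_supp by (auto split: if_splits)
qed simp

lemma per_k:
  assumes adm: "A2_index k"
  shows "bailey_f T a q L1 L2 * (\<Sum>r1\<le>L1. \<Sum>r2\<le>L2. a ^ r1 * q powi (int r1 ^ 2 - int r1 * int r2 + int r2 ^ 2) /
            (qpoch q q (int L1 - int r1) * qpoch q q (int L2 - int r2)) * bailey_kernel T a q r1 r2 k)
     = (case k of (k1, k2, k3) \<Rightarrow> a powi (k1 + k2) * q powi ((k1^2 + k2^2 + k3^2) div 2)) * bailey_kernel TypeII a q L1 L2 k"
proof -
  obtain k1 k2 k3 where kk: "k = (k1, k2, k3)" by (cases k) auto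
  have c: "k2 \<le> k1" "k3 \<le> k2" "k1 + k2 + k3 = 0" using adm by (auto simp: A2_index_def kk)
  show ?thesis
  proof (cases T)
    case TypeI
    then show ?thesis using typeI_k[OF c, of L1 L2] by (simp add: bailey_kernel_def kk)
  next
    case TypeII
    then show ?thesis using typeII_k[OF c, of L1 L2] by (simp add: bailey_kernel_def bailey_f_def kk)
  qed
qed

end

theorem theorem4p3:
  fixes T :: bailey_type and a q :: "'a::field"
    and \<alpha> :: "int \<times> int \<times> int \<Rightarrow> 'a" and \<beta> :: "nat \<Rightarrow> nat \<Rightarrow> 'a"
  assumes q_nz: "q \<noteq> 0"
    and q_gen: "\<And>n::nat. n \<ge> 1 \<Longrightarrow> q ^ n \<noteq> 1"
    and a_gen: "\<And>n::nat. n \<ge> 1 \<Longrightarrow> a * q ^ n \<noteq> 1"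
    and pair: "A2_bailey_pair T a q \<alpha> \<beta>"
  shows "A2_bailey_pair TypeII a q
           (\<lambda>(k1, k2, k3). a powi (k1 + k2) * q powi ((k1^2 + k2^2 + k3^2) div 2) * \<alpha> (k1, k2, k3))
           (\<lambda>L1 L2. bailey_f T a q L1 L2 *
              (\<Sum>r1\<le>L1. \<Sum>r2\<le>L2.
                 a ^ r1 * q powi (int r1 ^ 2 - int r1 * int r2 + int r2 ^ 2) /
                   (qpoch q q (int L1 - int r1) * qpoch q q (int L2 - int r2)) * \<beta> r1 r2))"
proof -
  interpret Z: qa q a
    by unfold_locales (use q_nz q_gen a_gen in auto)
  have pb: "\<beta> r1 r2 = Sum_any (\<lambda>k. if A2_index k then \<alpha> k * bailey_kernel T a q r1 r2 k else 0)" for r1 r2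
    using pair by (simp add: A2_bailey_pair_def)
  show ?thesis
    unfolding A2_bailey_pair_def
  proof (intro allI)
    fix L1 L2
    define c where "c r1 r2 = a ^ r1 * q powi (int r1 ^ 2 - int r1 * int r2 + int r2 ^ 2) /
                   (qpoch q q (int L1 - int r1) * qpoch q q (int L2 - int r2))" for r1 r2
    define g where "g r1 r2 k = (if A2_index k then \<alpha> k * bailey_kernel T a q r1 r2 k else 0)" for r1 r2 k
    have fin1: "finite {k. g r1 r2 k \<noteq> 0}" for r1 r2 unfolding g_def by (rule Z.kernel_fin)
    have "(\<Sum>r1\<le>L1. \<Sum>r2\<le>L2. c r1 r2 * \<beta> r1 r2) = (\<Sum>r1\<le>L1. \<Sum>r2\<le>L2. Sum_any (\<lambda>k. c r1 r2 * g r1 r2 k))"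
      by (simp add: pb g_def SA_cmult)
    also have "\<dots> = (\<Sum>r1\<le>L1. Sum_any (\<lambda>k. \<Sum>r2\<le>L2. c r1 r2 * g r1 r2 k))"
    proof (rule sum.cong[OF refl], rule SA_sum_swap)
      fix r1 r2 show "finite {k. c r1 r2 * g r1 r2 k \<noteq> 0}"
        by (rule finite_subset[OF _ fin1[of r1 r2]]) auto
    qed simp
    also have "\<dots> = Sum_any (\<lambda>k. \<Sum>r1\<le>L1. \<Sum>r2\<le>L2. c r1 r2 * g r1 r2 k)"
    proof (rule SA_sum_swap)
      fix r1 show "finite {k. (\<Sum>r2\<le>L2. c r1 r2 * g r1 r2 k) \<noteq> 0}"
      proof (rule finite_subset[of _ "\<Union>r2\<le>L2. {k. g r1 r2 k \<noteq> 0}"])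
        show "{k. (\<Sum>r2\<le>L2. c r1 r2 * g r1 r2 k) \<noteq> 0} \<subseteq> (\<Union>r2\<le>L2. {k. g r1 r2 k \<noteq> 0})"
          by (auto elim!: sum.not_neutral_contains_not_neutral)
        show "finite (\<Union>r2\<le>L2. {k. g r1 r2 k \<noteq> 0})" using fin1 by auto
      qed
    qed simp
    finally have e1: "(\<Sum>r1\<le>L1. \<Sum>r2\<le>L2. c r1 r2 * \<beta> r1 r2) = Sum_any (\<lambda>k. \<Sum>r1\<le>L1. \<Sum>r2\<le>L2. c r1 r2 * g r1 r2 k)" .
    have e2: "bailey_f T a q L1 L2 * (\<Sum>r1\<le>L1. \<Sum>r2\<le>L2. c r1 r2 * g r1 r2 k) =
        (if A2_index k then (case k of (k1, k2, k3) \<Rightarrow> a powi (k1 + k2) * q powi ((k1^2 + k2^2 + k3^2) div 2) * \<alpha> (k1, k2, k3)) *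
           bailey_kernel TypeII a q L1 L2 k else 0)" for k
    proof (cases "A2_index k")
      case True
      have "bailey_f T a q L1 L2 * (\<Sum>r1\<le>L1. \<Sum>r2\<le>L2. c r1 r2 * g r1 r2 k) =
          \<alpha> k * (bailey_f T a q L1 L2 * (\<Sum>r1\<le>L1. \<Sum>r2\<le>L2. c r1 r2 * bailey_kernel T a q r1 r2 k))"
        using True by (simp add: g_def sum_distrib_left mult_ac)
      also have "\<dots> = \<alpha> k * ((case k of (k1, k2, k3) \<Rightarrow> a powi (k1 + k2) * q powi ((k1^2 + k2^2 + k3^2) div 2)) * bailey_kernel TypeII a q L1 L2 k)"
        unfolding c_def using Z.per_k[OF True, of T L1 L2] by simp
      finally show ?thesis using True by (auto simp: mult_ac split: prod.splits)
    next
      case False then show ?thesis by (simp add: g_def)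
    qed
    show "bailey_f T a q L1 L2 *
              (\<Sum>r1\<le>L1. \<Sum>r2\<le>L2.
                 a ^ r1 * q powi (int r1 ^ 2 - int r1 * int r2 + int r2 ^ 2) /
                   (qpoch q q (int L1 - int r1) * qpoch q q (int L2 - int r2)) * \<beta> r1 r2) =
        Sum_any (\<lambda>k. if A2_index k then (case k of (k1, k2, k3) \<Rightarrow> a powi (k1 + k2) * q powi ((k1^2 + k2^2 + k3^2) div 2) * \<alpha> (k1, k2, k3)) *
           bailey_kernel TypeII a q L1 L2 k else 0)"
      unfolding c_def[symmetric] e1 e2[symmetric] by (rule SA_cmult[symmetric])
  qed
qed


end
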